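(* Let $k=\mathbb C$, $A=\mathbb C_{-1}[x_1,x_2]$ (so $x_2x_1=-x_1x_2$), $m\ge1$, $\lambda$ a primitive $2m$-th root of unity, and $G=M(2,1,2m)$, the subgroup of $\mathrm{Aut}(A)$ generated by $\tau_{2,1,1}$ and $\tau_{2,1,\lambda}$. Then $A^G=\mathbb C[x_1x_2,\ x_1^{2m}+x_2^{2m}]$, and $G$ is isomorphic to the dicyclic group $Q_{4m}=\langle a,b\mid a^{2m}=1,\ b^{-1}ab=a^{-1},\ b^2=a^m\rangle$ of order $4m$. If $m\ge2$, then $G$ is not isomorphic to any cyclic group, any symmetric group, or any group $G(m',p,n')$.
   Context: For $s\ne t$ and $\mu\in\mathbb C^\times$, $\tau_{s,t,\mu}$ is the graded automorphism of $A$ with $x_s\mapsto\mu x_t$, $x_t\mapsto-\mu^{-1}x_s$. For positive integers $m',p,n'$ with $p\mid m'$, $G(m',p,n')$ is the group of $n'\times n'$ complex matrices of the form $DP$ where $P$ is a permutation matrix and $D=\mathrm{diag}(\omega_1,\dots,\omega_{n'})$ with $\omega_i^{m'}=1$ and $(\omega_1\cdots\omega_{n'})^{m'/p}=1$; it has order $m'^{n'}n'!/p$. *)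

theory Defs
  imports "Jordan_Normal_Form.Matrix" "HOL-Algebra.Algebra" "HOL-Library.FuncSet"
begin

text \<open>An element of A is given by its coefficients with respect to the
  standard monomial basis x1^i x2^j (indexed by (i,j)); elements of A are the
  finitely supported coefficient functions.\<close>

type_synonym skpoly = "nat \<times> nat \<Rightarrow> complex"

definition skA :: "skpoly set" where
  "skA = {f. finite {e. f e \<noteq> 0}}"

definition sk_add :: "skpoly \<Rightarrow> skpoly \<Rightarrow> skpoly" where
  "sk_add f g = (\<lambda>e. f e + g e)"

definition sk_smult :: "complex \<Rightarrow> skpoly \<Rightarrow> skpoly" where
  "sk_smult c f = (\<lambda>e. c * f e)"

text \<open>Multiplication from the relation x2 x1 = - x1 x2:
  (x1^a x2^b)(x1^c x2^d) = (-1)^(b c) x1^(a+c) x2^(b+d).\<close>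
definition sk_mult :: "skpoly \<Rightarrow> skpoly \<Rightarrow> skpoly" where
  "sk_mult f g = (\<lambda>(i, j). \<Sum>a\<in>{0..i}. \<Sum>b\<in>{0..j}.
       (-1) ^ (b * (i - a)) * f (a, b) * g (i - a, j - b))"

definition sk_one :: skpoly where
  "sk_one = (\<lambda>e. if e = (0, 0) then 1 else 0)"

definition sk_x1 :: skpoly where
  "sk_x1 = (\<lambda>e. if e = (1, 0) then 1 else 0)"

definition sk_x2 :: skpoly where
  "sk_x2 = (\<lambda>e. if e = (0, 1) then 1 else 0)"

definition sk_x :: "nat \<Rightarrow> skpoly" where
  "sk_x s = (if s = 1 then sk_x1 else sk_x2)"

definition sk_pow :: "skpoly \<Rightarrow> nat \<Rightarrow> skpoly" where
  "sk_pow f n = (sk_mult f ^^ n) sk_one"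

definition sk_aut_set :: "(skpoly \<Rightarrow> skpoly) set" where
  "sk_aut_set = {\<phi>. \<phi> \<in> extensional skA \<and> bij_betw \<phi> skA skA
      \<and> (\<forall>f\<in>skA. \<forall>g\<in>skA. \<phi> (sk_add f g) = sk_add (\<phi> f) (\<phi> g))
      \<and> (\<forall>c. \<forall>f\<in>skA. \<phi> (sk_smult c f) = sk_smult c (\<phi> f))
      \<and> (\<forall>f\<in>skA. \<forall>g\<in>skA. \<phi> (sk_mult f g) = sk_mult (\<phi> f) (\<phi> g))
      \<and> \<phi> sk_one = sk_one}"

definition sk_Aut :: "(skpoly \<Rightarrow> skpoly) monoid" where
  "sk_Aut = \<lparr>carrier = sk_aut_set, mult = (\<lambda>\<phi> \<psi>. compose skA \<phi> \<psi>),
             one = restrict id skA\<rparr>"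

definition sk_tau :: "nat \<Rightarrow> nat \<Rightarrow> complex \<Rightarrow> (skpoly \<Rightarrow> skpoly)" where
  "sk_tau s t \<mu> = (THE \<phi>. \<phi> \<in> sk_aut_set
       \<and> \<phi> (sk_x s) = sk_smult \<mu> (sk_x t)
       \<and> \<phi> (sk_x t) = sk_smult (- inverse \<mu>) (sk_x s))"

definition sk_invariants :: "(skpoly \<Rightarrow> skpoly, 'b) monoid_scheme \<Rightarrow> skpoly set" where
  "sk_invariants G = {f \<in> skA. \<forall>g\<in>carrier G. g f = f}"

inductive_set sk_alg_gen :: "skpoly set \<Rightarrow> skpoly set" for S where
  scalar: "sk_smult c sk_one \<in> sk_alg_gen S"
| gen: "s \<in> S \<Longrightarrow> s \<in> sk_alg_gen S"
| add: "f \<in> sk_alg_gen S \<Longrightarrow> g \<in> sk_alg_gen S \<Longrightarrow> sk_add f g \<in> sk_alg_gen S"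
| mult: "f \<in> sk_alg_gen S \<Longrightarrow> g \<in> sk_alg_gen S \<Longrightarrow> sk_mult f g \<in> sk_alg_gen S"

text \<open>Model of the presentation <a,b | a^(2m)=1, b^-1 a b = a^-1, b^2 = a^m>
  by normal forms a^i b^e, 0 <= i < 2m, e in {0,1} (True means e = 1).\<close>
definition dicyclic_mult :: "nat \<Rightarrow> int \<times> bool \<Rightarrow> int \<times> bool \<Rightarrow> int \<times> bool" where
  "dicyclic_mult m x y = (case x of (i, e) \<Rightarrow> case y of (j, f) \<Rightarrow>
     if \<not> e then ((i + j) mod (2 * int m), f)
     else if \<not> f then ((i - j) mod (2 * int m), True)
     else ((i - j + int m) mod (2 * int m), False))"

definition dicyclic_group :: "nat \<Rightarrow> (int \<times> bool) monoid" where
  "dicyclic_group m = \<lparr>carrier = {0..<2 * int m} \<times> UNIV,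
                        mult = dicyclic_mult m, one = (0, False)\<rparr>"

definition perm_matrix :: "nat \<Rightarrow> (nat \<Rightarrow> nat) \<Rightarrow> complex mat" where
  "perm_matrix n \<sigma> = mat n n (\<lambda>(i, j). if i = \<sigma> j then 1 else 0)"

definition diag_matrix :: "nat \<Rightarrow> (nat \<Rightarrow> complex) \<Rightarrow> complex mat" where
  "diag_matrix n \<omega> = mat n n (\<lambda>(i, j). if i = j then \<omega> i else 0)"

definition Gmpn :: "nat \<Rightarrow> nat \<Rightarrow> nat \<Rightarrow> complex mat monoid" where
  "Gmpn m' p n' = \<lparr>carrier = {diag_matrix n' \<omega> * perm_matrix n' \<sigma> | \<omega> \<sigma>.
        \<sigma> permutes {..<n'} \<and> (\<forall>i<n'. \<omega> i ^ m' = 1)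
        \<and> (\<Prod>i<n'. \<omega> i) ^ (m' div p) = 1},
     mult = (*), one = 1\<^sub>m n'\<rparr>"

end

theory Submission
  imports Defs
begin


definition supp :: "skpoly \<Rightarrow> (nat \<times> nat) set" where
  "supp f = {e. f e \<noteq> 0}"

definition xmon :: "nat \<times> nat \<Rightarrow> skpoly" where
  "xmon t = (\<lambda>e. if e = t then 1 else 0)"

lemma skA_iff: "f \<in> skA \<longleftrightarrow> finite (supp f)"
  by (simp add: skA_def supp_def)

lemma xmon_skA[simp]: "xmon t \<in> skA"
proof -
  have "supp (xmon t) \<subseteq> {t}" by (auto simp: supp_def xmon_def)
  thus ?thesis by (simp add: skA_iff finite_subset)
qed

lemma sk_add_skA[simp]: "f \<in> skA \<Longrightarrow> g \<in> skA \<Longrightarrow> sk_add f g \<in> skA"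
proof -
  assume "f \<in> skA" "g \<in> skA"
  moreover have "supp (sk_add f g) \<subseteq> supp f \<union> supp g" by (auto simp: supp_def sk_add_def)
  ultimately show ?thesis by (simp add: skA_iff finite_subset)
qed

lemma sk_smult_skA[simp]: "f \<in> skA \<Longrightarrow> sk_smult c f \<in> skA"
proof -
  assume "f \<in> skA"
  moreover have "supp (sk_smult c f) \<subseteq> supp f" by (auto simp: supp_def sk_smult_def)
  ultimately show ?thesis by (simp add: skA_iff finite_subset)
qed

lemma sk_mult_skA[simp]: "f \<in> skA \<Longrightarrow> g \<in> skA \<Longrightarrow> sk_mult f g \<in> skA"
proof -
  assume f: "f \<in> skA" and g: "g \<in> skA"
  have "supp (sk_mult f g) \<subseteq> (\<lambda>((a,b),(c1,d1)). (a + c1, b + d1)) ` (supp f \<times> supp g)"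
  proof
    fix e assume "e \<in> supp (sk_mult f g)"
    then obtain i j where e: "e = (i,j)" and ne: "sk_mult f g (i,j) \<noteq> 0"
      by (cases e) (auto simp: supp_def)
    from ne obtain a b where ab: "a \<in> {0..i}" "b \<in> {0..j}"
       and "(-1) ^ (b * (i - a)) * f (a, b) * g (i - a, j - b) \<noteq> 0"
      unfolding sk_mult_def by (auto elim!: sum.not_neutral_contains_not_neutral)
    hence "f (a,b) \<noteq> 0" "g (i-a, j-b) \<noteq> 0" by auto
    with ab show "e \<in> (\<lambda>((a,b),(c1,d1)). (a + c1, b + d1)) ` (supp f \<times> supp g)"
      unfolding e supp_def
      by (intro image_eqI[where x="((a,b),(i-a,j-b))"]) auto
  qed
  moreover have "finite (supp f \<times> supp g)" using f g by (simp add: skA_iff)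
  ultimately show ?thesis by (simp add: skA_iff finite_subset)
qed

lemma sk_one_mono: "sk_one = xmon (0,0)" by (simp add: sk_one_def xmon_def)
lemma sk_x1_mono: "sk_x1 = xmon (1,0)" by (simp add: sk_x1_def xmon_def)
lemma sk_x2_mono: "sk_x2 = xmon (0,1)" by (simp add: sk_x2_def xmon_def)

lemma sk_mult_xmon_left:
  "sk_mult (xmon (a,b)) g (i,j) =
     (if a \<le> i \<and> b \<le> j then (-1) ^ (b * (i - a)) * g (i - a, j - b) else 0)"
proof -
  have "sk_mult (xmon (a,b)) g (i,j) = (\<Sum>a'\<in>{0..i}. \<Sum>b'\<in>{0..j}.
       (if a' = a \<and> b' = b then (-1) ^ (b * (i - a)) * g (i - a, j - b) else 0))"
    unfolding sk_mult_def xmon_def prod.case by (intro sum.cong refl) auto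
  also have "\<dots> = (\<Sum>a'\<in>{0..i}. if a' = a then (if b \<le> j then (-1) ^ (b * (i - a)) * g (i - a, j - b) else 0) else 0)"
    by (intro sum.cong refl) (auto simp: sum.delta')
  also have "\<dots> = (if a \<le> i \<and> b \<le> j then (-1) ^ (b * (i - a)) * g (i - a, j - b) else 0)"
    by (simp add: sum.delta')
  finally show ?thesis .
qed

lemma sk_mult_xmon_xmon:
  "sk_mult (xmon (a,b)) (xmon (c1,d1)) = (\<lambda>e. (-1)^(b * c1) * xmon (a + c1, b + d1) e)"
proof (rule ext)
  fix e :: "nat \<times> nat"
  obtain i j where e: "e = (i,j)" by (cases e)
  show "sk_mult (xmon (a,b)) (xmon (c1,d1)) e = (-1)^(b * c1) * xmon (a + c1, b + d1) e"
    unfolding e sk_mult_xmon_left by (auto simp: xmon_def)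
qed

lemma sk_mult_const: "sk_mult (sk_smult c sk_one) g = sk_smult c g"
proof (rule ext)
  fix e :: "nat \<times> nat"
  obtain i j where e: "e = (i,j)" by (cases e)
  have "sk_smult c sk_one = sk_smult c (xmon (0,0))" by (simp add: sk_one_mono)
  have "sk_mult (sk_smult c (xmon (0,0))) g (i,j) = c * sk_mult (xmon (0,0)) g (i,j)"
    unfolding sk_mult_def sk_smult_def prod.case by (simp add: sum_distrib_left mult.assoc mult.left_commute)
  thus "sk_mult (sk_smult c sk_one) g e = sk_smult c g e"
    unfolding e sk_one_mono sk_mult_xmon_left by (simp add: sk_smult_def)
qed


lemma aut_inv:
  assumes "\<phi> \<in> sk_aut_set"
  shows "restrict (inv_into skA \<phi>) skA \<in> sk_aut_set"
proof -
  let ?\<psi> = "restrict (inv_into skA \<phi>) skA"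
  have ext: "\<phi> \<in> extensional skA" and bij: "bij_betw \<phi> skA skA"
    and add: "\<forall>f\<in>skA. \<forall>g\<in>skA. \<phi> (sk_add f g) = sk_add (\<phi> f) (\<phi> g)"
    and sm: "\<forall>c. \<forall>f\<in>skA. \<phi> (sk_smult c f) = sk_smult c (\<phi> f)"
    and mu: "\<forall>f\<in>skA. \<forall>g\<in>skA. \<phi> (sk_mult f g) = sk_mult (\<phi> f) (\<phi> g)"
    and one: "\<phi> sk_one = sk_one"
    using assms unfolding sk_aut_set_def by blast+
  have inj: "inj_on \<phi> skA" using bij by (simp add: bij_betw_def)
  have ib: "bij_betw (inv_into skA \<phi>) skA skA" using bij by (rule bij_betw_inv_into)
  have bij2: "bij_betw ?\<psi> skA skA"
    by (rule bij_betw_cong[THEN iffD2, OF _ ib]) simp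
  have inS: "\<And>f. f \<in> skA \<Longrightarrow> inv_into skA \<phi> f \<in> skA"
    using bij_betwE[OF ib] by blast
  have rr: "\<And>f. f \<in> skA \<Longrightarrow> \<phi> (inv_into skA \<phi> f) = f"
    by (rule bij_betw_inv_into_right[OF bij])
  have key: "\<And>f h. f \<in> skA \<Longrightarrow> h \<in> skA \<Longrightarrow> \<phi> h = f \<Longrightarrow> inv_into skA \<phi> f = h"
    by (rule inv_into_f_eq[OF inj])
  have sk1: "sk_one \<in> skA" by (simp add: sk_one_mono)
  have A: "?\<psi> (sk_add f g) = sk_add (?\<psi> f) (?\<psi> g)" if f: "f \<in> skA" and g: "g \<in> skA" for f g
  proof -
    have "inv_into skA \<phi> (sk_add f g) = sk_add (inv_into skA \<phi> f) (inv_into skA \<phi> g)"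
      apply (rule key)
        apply (rule sk_add_skA[OF f g])
       apply (rule sk_add_skA[OF inS[OF f] inS[OF g]])
      using add inS[OF f] inS[OF g] rr[OF f] rr[OF g] by simp
    thus ?thesis using f g by simp
  qed
  have M: "?\<psi> (sk_mult f g) = sk_mult (?\<psi> f) (?\<psi> g)" if f: "f \<in> skA" and g: "g \<in> skA" for f g
  proof -
    have "inv_into skA \<phi> (sk_mult f g) = sk_mult (inv_into skA \<phi> f) (inv_into skA \<phi> g)"
      apply (rule key)
        apply (rule sk_mult_skA[OF f g])
       apply (rule sk_mult_skA[OF inS[OF f] inS[OF g]])
      using mu inS[OF f] inS[OF g] rr[OF f] rr[OF g] by simp
    thus ?thesis using f g by simp
  qed
  have C: "?\<psi> (sk_smult c f) = sk_smult c (?\<psi> f)" if f: "f \<in> skA" for c f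
  proof -
    have "inv_into skA \<phi> (sk_smult c f) = sk_smult c (inv_into skA \<phi> f)"
      apply (rule key)
        apply (rule sk_smult_skA[OF f])
       apply (rule sk_smult_skA[OF inS[OF f]])
      using sm inS[OF f] rr[OF f] by simp
    thus ?thesis using f by simp
  qed
  have O: "?\<psi> sk_one = sk_one"
  proof -
    have "inv_into skA \<phi> sk_one = sk_one" by (rule key[OF sk1 sk1 one])
    thus ?thesis using sk1 by simp
  qed
  show ?thesis unfolding sk_aut_set_def
    using bij2 A M C O by simp
qed

lemma aut_compose:
  assumes "\<phi> \<in> sk_aut_set" "\<psi> \<in> sk_aut_set"
  shows "compose skA \<phi> \<psi> \<in> sk_aut_set"
proof -
  have b1: "bij_betw \<phi> skA skA" and b2: "bij_betw \<psi> skA skA"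
    and add1: "\<forall>f\<in>skA. \<forall>g\<in>skA. \<phi> (sk_add f g) = sk_add (\<phi> f) (\<phi> g)"
    and sm1: "\<forall>c. \<forall>f\<in>skA. \<phi> (sk_smult c f) = sk_smult c (\<phi> f)"
    and mu1: "\<forall>f\<in>skA. \<forall>g\<in>skA. \<phi> (sk_mult f g) = sk_mult (\<phi> f) (\<phi> g)"
    and one1: "\<phi> sk_one = sk_one"
    and add2: "\<forall>f\<in>skA. \<forall>g\<in>skA. \<psi> (sk_add f g) = sk_add (\<psi> f) (\<psi> g)"
    and sm2: "\<forall>c. \<forall>f\<in>skA. \<psi> (sk_smult c f) = sk_smult c (\<psi> f)"
    and mu2: "\<forall>f\<in>skA. \<forall>g\<in>skA. \<psi> (sk_mult f g) = sk_mult (\<psi> f) (\<psi> g)"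
    and one2: "\<psi> sk_one = sk_one"
    using assms unfolding sk_aut_set_def by blast+
  have in2: "\<And>f. f \<in> skA \<Longrightarrow> \<psi> f \<in> skA" using bij_betwE[OF b2] by blast
  have sk1: "sk_one \<in> skA" by (simp add: sk_one_mono)
  have B: "bij_betw (compose skA \<phi> \<psi>) skA skA"
    by (rule bij_betw_cong[THEN iffD2, OF _ bij_betw_trans[OF b2 b1]]) (simp add: compose_def)
  have A: "compose skA \<phi> \<psi> (sk_add f g) = sk_add (compose skA \<phi> \<psi> f) (compose skA \<phi> \<psi> g)"
    if "f \<in> skA" "g \<in> skA" for f g
    using that add1 add2 in2 by (simp add: compose_def)
  have M: "compose skA \<phi> \<psi> (sk_mult f g) = sk_mult (compose skA \<phi> \<psi> f) (compose skA \<phi> \<psi> g)"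
    if "f \<in> skA" "g \<in> skA" for f g
    using that mu1 mu2 in2 by (simp add: compose_def)
  have C: "compose skA \<phi> \<psi> (sk_smult c f) = sk_smult c (compose skA \<phi> \<psi> f)"
    if "f \<in> skA" for c f
    using that sm1 sm2 in2 by (simp add: compose_def)
  have O: "compose skA \<phi> \<psi> sk_one = sk_one"
    using sk1 one1 one2 by (simp add: compose_def)
  show ?thesis unfolding sk_aut_set_def
    using B A M C O by (simp add: compose_def)
qed

lemma aut_id: "restrict id skA \<in> sk_aut_set"
proof -
  have sk1: "sk_one \<in> skA" by (simp add: sk_one_mono)
  have "bij_betw (restrict id skA) skA skA"
    by (rule bij_betw_cong[THEN iffD2, OF _ bij_betw_id]) simp
  thus ?thesis unfolding sk_aut_set_def using sk1 by simp
qed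

lemma group_sk_Aut: "group sk_Aut"
proof (rule groupI)
  show "\<And>x y. x \<in> carrier sk_Aut \<Longrightarrow> y \<in> carrier sk_Aut \<Longrightarrow> x \<otimes>\<^bsub>sk_Aut\<^esub> y \<in> carrier sk_Aut"
    by (simp add: sk_Aut_def aut_compose)
  show "\<one>\<^bsub>sk_Aut\<^esub> \<in> carrier sk_Aut" by (simp add: sk_Aut_def aut_id)
  show "\<And>x y z. x \<in> carrier sk_Aut \<Longrightarrow> y \<in> carrier sk_Aut \<Longrightarrow> z \<in> carrier sk_Aut \<Longrightarrow>
    x \<otimes>\<^bsub>sk_Aut\<^esub> y \<otimes>\<^bsub>sk_Aut\<^esub> z = x \<otimes>\<^bsub>sk_Aut\<^esub> (y \<otimes>\<^bsub>sk_Aut\<^esub> z)"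
  proof -
    fix x y z assume "z \<in> carrier sk_Aut"
    hence "z \<in> skA \<rightarrow> skA" unfolding sk_Aut_def sk_aut_set_def using bij_betw_imp_funcset by auto
    thus "x \<otimes>\<^bsub>sk_Aut\<^esub> y \<otimes>\<^bsub>sk_Aut\<^esub> z = x \<otimes>\<^bsub>sk_Aut\<^esub> (y \<otimes>\<^bsub>sk_Aut\<^esub> z)"
      by (simp add: sk_Aut_def compose_assoc)
  qed
  show "\<And>x. x \<in> carrier sk_Aut \<Longrightarrow> \<one>\<^bsub>sk_Aut\<^esub> \<otimes>\<^bsub>sk_Aut\<^esub> x = x"
  proof -
    fix x assume "x \<in> carrier sk_Aut"
    hence "x \<in> extensional skA" "bij_betw x skA skA" by (auto simp: sk_Aut_def sk_aut_set_def)
    thus "\<one>\<^bsub>sk_Aut\<^esub> \<otimes>\<^bsub>sk_Aut\<^esub> x = x"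
      using Id_compose[of x skA skA] bij_betw_imp_funcset[of x skA skA]
      by (simp add: sk_Aut_def restrict_def id_def)
  qed
  show "\<And>x. x \<in> carrier sk_Aut \<Longrightarrow> \<exists>y\<in>carrier sk_Aut. y \<otimes>\<^bsub>sk_Aut\<^esub> x = \<one>\<^bsub>sk_Aut\<^esub>"
  proof -
    fix x assume x: "x \<in> carrier sk_Aut"
    hence "x \<in> Bij skA" by (auto simp: sk_Aut_def sk_aut_set_def Bij_def)
    hence "compose skA (restrict (inv_into skA x) skA) x = (\<lambda>y\<in>skA. y)"
      by (rule Bij_compose_restrict_eq)
    moreover have "restrict (inv_into skA x) skA \<in> sk_aut_set"
      using x by (intro aut_inv) (simp add: sk_Aut_def)
    ultimately show "\<exists>y\<in>carrier sk_Aut. y \<otimes>\<^bsub>sk_Aut\<^esub> x = \<one>\<^bsub>sk_Aut\<^esub>"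
      by (auto simp: sk_Aut_def restrict_def id_def intro!: bexI[where x="restrict (inv_into skA x) skA"])
  qed
qed


definition Mon :: "complex \<Rightarrow> complex \<Rightarrow> bool \<Rightarrow> skpoly \<Rightarrow> skpoly" where
  "Mon \<alpha> \<beta> b = restrict (\<lambda>f. \<lambda>(p,q). if b then (-1)^(p * q) * \<alpha>^q * \<beta>^p * f (q,p)
                                     else \<alpha>^p * \<beta>^q * f (p,q)) skA"

lemma Mon_app: "f \<in> skA \<Longrightarrow> Mon \<alpha> \<beta> b f (p,q) =
   (if b then (-1)^(p * q) * \<alpha>^q * \<beta>^p * f (q,p) else \<alpha>^p * \<beta>^q * f (p,q))"
  by (simp add: Mon_def)

lemma Mon_skA[simp]: "f \<in> skA \<Longrightarrow> Mon \<alpha> \<beta> b f \<in> skA"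
proof -
  assume f: "f \<in> skA"
  have "supp (Mon \<alpha> \<beta> b f) \<subseteq> supp f \<union> prod.swap ` supp f"
  proof
    fix e assume "e \<in> supp (Mon \<alpha> \<beta> b f)"
    then obtain p q where e: "e = (p,q)" and ne: "Mon \<alpha> \<beta> b f (p,q) \<noteq> 0"
      by (cases e) (auto simp: supp_def)
    show "e \<in> supp f \<union> prod.swap ` supp f"
    proof (cases b)
      case True
      with ne f have "f (q,p) \<noteq> 0" by (auto simp: Mon_app)
      hence "(q,p) \<in> supp f" by (simp add: supp_def)
      thus ?thesis unfolding e by (auto intro: image_eqI[where x="(q,p)"])
    next
      case False
      with ne f have "f (p,q) \<noteq> 0" by (auto simp: Mon_app)
      thus ?thesis unfolding e by (simp add: supp_def)
    qed
  qed
  moreover have "finite (supp f \<union> prod.swap ` supp f)" using f by (simp add: skA_iff)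
  ultimately show ?thesis by (simp add: skA_iff finite_subset)
qed

lemma Mon_comp_app:
  assumes f: "f \<in> skA"
  shows "Mon \<alpha> \<beta> b (Mon \<gamma> \<delta> b' f) =
     (if b' then Mon (\<gamma> * \<beta>) (\<delta> * \<alpha>) (\<not> b) f else Mon (\<gamma> * \<alpha>) (\<delta> * \<beta>) b f)"
proof (rule ext)
  fix e :: "nat \<times> nat"
  obtain p q where e: "e = (p,q)" by (cases e)
  have s: "(-1::complex)^(p * q) * (-1)^(q * p) = 1"
    by (simp add: mult.commute power_add[symmetric] minus_one_power_iff)
  have f': "Mon \<gamma> \<delta> b' f \<in> skA" using f by simp
  note M = Mon_app[OF f'] Mon_app[OF f]
  have "Mon \<alpha> \<beta> b (Mon \<gamma> \<delta> b' f) (p,q) =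
     (if b' then Mon (\<gamma> * \<beta>) (\<delta> * \<alpha>) (\<not> b) f else Mon (\<gamma> * \<alpha>) (\<delta> * \<beta>) b f) (p,q)"
  proof (cases b; cases b')
    assume "b" "b'"
    hence "Mon \<alpha> \<beta> b (Mon \<gamma> \<delta> b' f) (p,q) =
       ((-1)^(p * q) * (-1)^(q * p)) * ((\<gamma> * \<beta>)^p * (\<delta> * \<alpha>)^q * f (p,q))"
      unfolding M by (simp add: power_mult_distrib mult_ac)
    also have "\<dots> = (\<gamma> * \<beta>)^p * (\<delta> * \<alpha>)^q * f (p,q)" unfolding s by simp
    also have "\<dots> = Mon (\<gamma> * \<beta>) (\<delta> * \<alpha>) False f (p,q)" using f by (simp add: Mon_app)
    finally show ?thesis using \<open>b\<close> \<open>b'\<close> by simp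
  next
    assume "b" "\<not> b'"
    thus ?thesis using f by (simp add: Mon_app power_mult_distrib mult_ac)
  next
    assume "\<not> b" "b'"
    thus ?thesis using f by (simp add: Mon_app power_mult_distrib mult_ac)
  next
    assume "\<not> b" "\<not> b'"
    thus ?thesis using f by (simp add: Mon_app power_mult_distrib mult_ac)
  qed
  thus "Mon \<alpha> \<beta> b (Mon \<gamma> \<delta> b' f) e =
     (if b' then Mon (\<gamma> * \<beta>) (\<delta> * \<alpha>) (\<not> b) f else Mon (\<gamma> * \<alpha>) (\<delta> * \<beta>) b f) e"
    by (simp add: e)
qed

lemma Mon_comp:
  "compose skA (Mon \<alpha> \<beta> b) (Mon \<gamma> \<delta> b') =
     (if b' then Mon (\<gamma> * \<beta>) (\<delta> * \<alpha>) (\<not> b) else Mon (\<gamma> * \<alpha>) (\<delta> * \<beta>) b)"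
proof (rule ext)
  fix f
  show "compose skA (Mon \<alpha> \<beta> b) (Mon \<gamma> \<delta> b') f =
     (if b' then Mon (\<gamma> * \<beta>) (\<delta> * \<alpha>) (\<not> b) else Mon (\<gamma> * \<alpha>) (\<delta> * \<beta>) b) f"
  proof (cases "f \<in> skA")
    case True
    hence "compose skA (Mon \<alpha> \<beta> b) (Mon \<gamma> \<delta> b') f = Mon \<alpha> \<beta> b (Mon \<gamma> \<delta> b' f)"
      by (rule compose_eq)
    thus ?thesis using Mon_comp_app[OF True] by simp
  next
    case False
    hence "compose skA (Mon \<alpha> \<beta> b) (Mon \<gamma> \<delta> b') f = undefined"
      by (simp add: compose_def)
    moreover have "Mon a1 a2 a3 f = undefined" for a1 a2 a3
      using False by (simp add: Mon_def)
    ultimately show ?thesis by simp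
  qed
qed

lemma Mon_id: "Mon 1 1 False = restrict id skA"
proof (rule ext)
  fix f show "Mon 1 1 False f = restrict id skA f"
    by (cases "f \<in> skA") (auto simp: Mon_def fun_eq_iff)
qed

lemma Mon_add: "f \<in> skA \<Longrightarrow> g \<in> skA \<Longrightarrow>
   Mon \<alpha> \<beta> b (sk_add f g) = sk_add (Mon \<alpha> \<beta> b f) (Mon \<alpha> \<beta> b g)"
proof (rule ext)
  fix e :: "nat \<times> nat"
  assume f: "f \<in> skA" and g: "g \<in> skA"
  obtain p q where e: "e = (p,q)" by (cases e)
  have h: "sk_add f g \<in> skA" using f g by simp
  show "Mon \<alpha> \<beta> b (sk_add f g) e = sk_add (Mon \<alpha> \<beta> b f) (Mon \<alpha> \<beta> b g) e"
    unfolding e sk_add_def[of "Mon \<alpha> \<beta> b f"] Mon_app[OF h] Mon_app[OF f] Mon_app[OF g]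
    by (simp add: sk_add_def distrib_left)
qed

lemma Mon_smult: "f \<in> skA \<Longrightarrow>
   Mon \<alpha> \<beta> b (sk_smult c f) = sk_smult c (Mon \<alpha> \<beta> b f)"
proof (rule ext)
  fix e :: "nat \<times> nat"
  assume f: "f \<in> skA"
  obtain p q where e: "e = (p,q)" by (cases e)
  have h: "sk_smult c f \<in> skA" using f by simp
  show "Mon \<alpha> \<beta> b (sk_smult c f) e = sk_smult c (Mon \<alpha> \<beta> b f) e"
    unfolding e sk_smult_def[of c "Mon \<alpha> \<beta> b f"] Mon_app[OF h] Mon_app[OF f]
    by (simp add: sk_smult_def mult.left_commute)
qed

lemma Mon_one: "Mon \<alpha> \<beta> b sk_one = sk_one"
proof (rule ext)
  fix e :: "nat \<times> nat"
  obtain p q where e: "e = (p,q)" by (cases e)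
  have h: "sk_one \<in> skA" by (simp add: sk_one_mono)
  show "Mon \<alpha> \<beta> b sk_one e = sk_one e"
    unfolding e Mon_app[OF h] by (cases b) (auto simp: sk_one_def)
qed

lemma Mon_mult_F: "f \<in> skA \<Longrightarrow> g \<in> skA \<Longrightarrow>
   Mon \<alpha> \<beta> False (sk_mult f g) = sk_mult (Mon \<alpha> \<beta> False f) (Mon \<alpha> \<beta> False g)"
proof (rule ext)
  fix e :: "nat \<times> nat"
  assume f: "f \<in> skA" and g: "g \<in> skA"
  obtain i j where e: "e = (i,j)" by (cases e)
  have "Mon \<alpha> \<beta> False (sk_mult f g) (i,j) = \<alpha>^i * \<beta>^j * sk_mult f g (i,j)"
    using f g by (simp add: Mon_app)
  also have "\<dots> = (\<Sum>a\<in>{0..i}. \<Sum>b\<in>{0..j}.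
       \<alpha>^i * \<beta>^j * ((-1) ^ (b * (i - a)) * f (a, b) * g (i - a, j - b)))"
    by (simp add: sk_mult_def sum_distrib_left)
  also have "\<dots> = (\<Sum>a\<in>{0..i}. \<Sum>b\<in>{0..j}.
       (-1) ^ (b * (i - a)) * (\<alpha>^a * \<beta>^b * f (a, b)) * (\<alpha>^(i-a) * \<beta>^(j-b) * g (i - a, j - b)))"
  proof (intro sum.cong refl)
    fix a b assume a: "a \<in> {0..i}" and b: "b \<in> {0..j}"
    have "\<alpha>^i = \<alpha>^a * \<alpha>^(i-a)" using a by (simp add: power_add[symmetric])
    moreover have "\<beta>^j = \<beta>^b * \<beta>^(j-b)" using b by (simp add: power_add[symmetric])
    ultimately show "\<alpha>^i * \<beta>^j * ((-1) ^ (b * (i - a)) * f (a, b) * g (i - a, j - b)) =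
       (-1) ^ (b * (i - a)) * (\<alpha>^a * \<beta>^b * f (a, b)) * (\<alpha>^(i-a) * \<beta>^(j-b) * g (i - a, j - b))"
      by (simp add: mult_ac)
  qed
  also have "\<dots> = sk_mult (Mon \<alpha> \<beta> False f) (Mon \<alpha> \<beta> False g) (i,j)"
    using f g by (simp add: sk_mult_def Mon_app)
  finally show "Mon \<alpha> \<beta> False (sk_mult f g) e = sk_mult (Mon \<alpha> \<beta> False f) (Mon \<alpha> \<beta> False g) e"
    unfolding e .
qed

lemma sign_swap:
  assumes "a \<le> i" "b \<le> j"
  shows "(-1::complex) ^ (i * j) * (-1) ^ (a * (j - b)) =
         (-1) ^ (b * (i - a)) * (-1) ^ (a * b) * (-1) ^ ((i - a) * (j - b))"
proof -
  obtain c d where i: "i = a + c" and j: "j = b + d"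
    using assms le_Suc_ex by blast
  have X: "(a + c) * (b + d) + a * d = (b * c + a * b + c * d) + 2 * (a * d)"
    by (simp add: algebra_simps)
  have "(-1::complex) ^ (i * j) * (-1) ^ (a * (j - b)) = (-1) ^ ((a + c) * (b + d) + a * d)"
    unfolding i j by (simp add: power_add)
  also have "\<dots> = (-1) ^ (b * c + a * b + c * d)"
    unfolding X power_add power_mult by simp
  also have "\<dots> = (-1) ^ (b * (i - a)) * (-1) ^ (a * b) * (-1) ^ ((i - a) * (j - b))"
    unfolding i j by (simp add: power_add)
  finally show ?thesis .
qed

lemma Mon_mult_S: "f \<in> skA \<Longrightarrow> g \<in> skA \<Longrightarrow>
   Mon 1 1 True (sk_mult f g) = sk_mult (Mon 1 1 True f) (Mon 1 1 True g)"
proof (rule ext)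
  fix e :: "nat \<times> nat"
  assume f: "f \<in> skA" and g: "g \<in> skA"
  obtain i j where e: "e = (i,j)" by (cases e)
  have "Mon 1 1 True (sk_mult f g) (i,j) = (-1)^(i * j) * sk_mult f g (j,i)"
    using f g by (simp add: Mon_app)
  also have "\<dots> = (\<Sum>a\<in>{0..j}. \<Sum>b\<in>{0..i}.
       (-1)^(i * j) * ((-1) ^ (b * (j - a)) * f (a, b) * g (j - a, i - b)))"
    by (simp add: sk_mult_def sum_distrib_left)
  also have "\<dots> = (\<Sum>b\<in>{0..i}. \<Sum>a\<in>{0..j}.
       (-1)^(i * j) * ((-1) ^ (b * (j - a)) * f (a, b) * g (j - a, i - b)))"
    by (rule sum.swap)
  also have "\<dots> = (\<Sum>a\<in>{0..i}. \<Sum>b\<in>{0..j}.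
       (-1) ^ (b * (i - a)) * ((-1)^(a * b) * f (b, a)) * ((-1)^((i-a) * (j-b)) * g (j - b, i - a)))"
  proof (intro sum.cong refl)
    fix a b assume a: "a \<in> {0..i}" and b: "b \<in> {0..j}"
    have "(-1::complex) ^ (i * j) * (-1) ^ (a * (j - b)) =
         (-1) ^ (b * (i - a)) * (-1) ^ (a * b) * (-1) ^ ((i - a) * (j - b))"
      using a b by (intro sign_swap) auto
    hence h: "(-1::complex) ^ (i * j) * (-1) ^ (a * (j - b)) =
         (-1) ^ (b * (i - a)) * (-1) ^ (a * b) * (-1) ^ ((i - a) * (j - b))" .
    have "(-1)^(i * j) * ((-1) ^ (a * (j - b)) * f (b, a) * g (j - b, i - a)) =
       ((-1::complex) ^ (i * j) * (-1) ^ (a * (j - b))) * (f (b, a) * g (j - b, i - a))"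
      by (simp only: mult.assoc)
    also have "\<dots> = ((-1) ^ (b * (i - a)) * (-1) ^ (a * b) * (-1) ^ ((i - a) * (j - b))) * (f (b, a) * g (j - b, i - a))"
      by (simp only: h)
    also have "\<dots> = (-1) ^ (b * (i - a)) * ((-1)^(a * b) * f (b, a)) * ((-1)^((i-a) * (j-b)) * g (j - b, i - a))"
      by (simp only: mult_ac)
    finally show "(-1)^(i * j) * ((-1) ^ (a * (j - b)) * f (b, a) * g (j - b, i - a)) =
       (-1) ^ (b * (i - a)) * ((-1)^(a * b) * f (b, a)) * ((-1)^((i-a) * (j-b)) * g (j - b, i - a))" .
  qed
  also have "\<dots> = sk_mult (Mon 1 1 True f) (Mon 1 1 True g) (i,j)"
    using f g by (simp add: sk_mult_def Mon_app mult.commute)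
  finally show "Mon 1 1 True (sk_mult f g) e = sk_mult (Mon 1 1 True f) (Mon 1 1 True g) e"
    unfolding e .
qed

lemma Mon_T_split: "f \<in> skA \<Longrightarrow> Mon \<alpha> \<beta> True f = Mon 1 1 True (Mon \<alpha> \<beta> False f)"
  by (simp add: Mon_comp_app)

lemma Mon_mult: "f \<in> skA \<Longrightarrow> g \<in> skA \<Longrightarrow>
   Mon \<alpha> \<beta> b (sk_mult f g) = sk_mult (Mon \<alpha> \<beta> b f) (Mon \<alpha> \<beta> b g)"
proof (cases b)
  case True
  assume f: "f \<in> skA" and g: "g \<in> skA"
  show ?thesis using True f g
    by (simp add: Mon_T_split Mon_mult_F Mon_mult_S)
qed (simp add: Mon_mult_F)

lemma Mon_aut:
  assumes "\<alpha> \<noteq> 0" "\<beta> \<noteq> 0"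
  shows "Mon \<alpha> \<beta> b \<in> sk_aut_set"
proof -
  define \<alpha>' \<beta>' where "\<alpha>' = (if b then inverse \<beta> else inverse \<alpha>)"
     and "\<beta>' = (if b then inverse \<alpha> else inverse \<beta>)"
  have i1: "f \<in> skA \<Longrightarrow> Mon \<alpha>' \<beta>' b (Mon \<alpha> \<beta> b f) = f" for f
    using assms unfolding \<alpha>'_def \<beta>'_def
    by (cases b) (simp_all add: Mon_comp_app Mon_id)
  have i2: "f \<in> skA \<Longrightarrow> Mon \<alpha> \<beta> b (Mon \<alpha>' \<beta>' b f) = f" for f
    using assms unfolding \<alpha>'_def \<beta>'_def
    by (cases b) (simp_all add: Mon_comp_app Mon_id)
  have bij: "bij_betw (Mon \<alpha> \<beta> b) skA skA"
    by (rule bij_betw_byWitness[where f'="Mon \<alpha>' \<beta>' b"]) (auto simp: i1 i2)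
  show ?thesis unfolding sk_aut_set_def
    using bij by (simp add: Mon_add Mon_smult Mon_mult Mon_one) (simp add: Mon_def)
qed


lemma mono_i0_mult: "sk_mult (xmon (i,0)) (xmon (1,0)) = xmon (Suc i, 0)"
  by (simp add: sk_mult_xmon_xmon)

lemma mono_0j_mult: "sk_mult (xmon (0,j)) (xmon (0,1)) = xmon (0, Suc j)"
  by (simp add: sk_mult_xmon_xmon)

lemma mono_ij_mult: "sk_mult (xmon (i,0)) (xmon (0,j)) = xmon (i, j)"
  by (simp add: sk_mult_xmon_xmon)

lemma skA_decomp_induct:
  assumes fin: "finite S"
    and zero: "P (\<lambda>e. 0)"
    and step: "\<And>f c t. f \<in> skA \<Longrightarrow> P f \<Longrightarrow> P (sk_add f (sk_smult c (xmon t)))"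
  shows "\<forall>f. supp f \<subseteq> S \<longrightarrow> P f"
  using fin
proof (induction S rule: finite_induct)
  case empty
  show ?case
  proof (intro allI impI)
    fix f assume "supp f \<subseteq> {}"
    hence "f = (\<lambda>e. 0)" by (auto simp: supp_def fun_eq_iff)
    thus "P f" using zero by simp
  qed
next
  case (insert t S)
  show ?case
  proof (intro allI impI)
    fix f assume sf: "supp f \<subseteq> insert t S"
    define f' where "f' = f(t := 0)"
    have s': "supp f' \<subseteq> S" using sf by (auto simp: supp_def f'_def)
    hence "P f'" using insert.IH by blast
    moreover have "f' \<in> skA" using s' insert.hyps(1) by (simp add: skA_iff finite_subset)
    ultimately have "P (sk_add f' (sk_smult (f t) (xmon t)))" by (rule step[rotated])
    moreover have "sk_add f' (sk_smult (f t) (xmon t)) = f"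
      by (auto simp: fun_eq_iff sk_add_def sk_smult_def xmon_def f'_def)
    ultimately show "P f" by simp
  qed
qed


lemma aut_determined:
  assumes ph: "\<phi> \<in> sk_aut_set" and ps: "\<psi> \<in> sk_aut_set"
    and e1: "\<phi> sk_x1 = \<psi> sk_x1" and e2: "\<phi> sk_x2 = \<psi> sk_x2"
  shows "\<phi> = \<psi>"
proof -
  have ext1: "\<phi> \<in> extensional skA"
    and add1: "\<forall>f\<in>skA. \<forall>g\<in>skA. \<phi> (sk_add f g) = sk_add (\<phi> f) (\<phi> g)"
    and sm1: "\<forall>c. \<forall>f\<in>skA. \<phi> (sk_smult c f) = sk_smult c (\<phi> f)"
    and mu1: "\<forall>f\<in>skA. \<forall>g\<in>skA. \<phi> (sk_mult f g) = sk_mult (\<phi> f) (\<phi> g)"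
    and one1: "\<phi> sk_one = sk_one"
    using ph unfolding sk_aut_set_def by blast+
  have ext2: "\<psi> \<in> extensional skA"
    and add2: "\<forall>f\<in>skA. \<forall>g\<in>skA. \<psi> (sk_add f g) = sk_add (\<psi> f) (\<psi> g)"
    and sm2: "\<forall>c. \<forall>f\<in>skA. \<psi> (sk_smult c f) = sk_smult c (\<psi> f)"
    and mu2: "\<forall>f\<in>skA. \<forall>g\<in>skA. \<psi> (sk_mult f g) = sk_mult (\<psi> f) (\<psi> g)"
    and one2: "\<psi> sk_one = sk_one"
    using ps unfolding sk_aut_set_def by blast+
  define E where "E = {g \<in> skA. \<phi> g = \<psi> g}"
  have Em: "sk_mult g h \<in> E" if "g \<in> E" "h \<in> E" for g h
    using that mu1 mu2 by (simp add: E_def)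
  have Ea: "sk_add g h \<in> E" if "g \<in> E" "h \<in> E" for g h
    using that add1 add2 by (simp add: E_def)
  have Es: "sk_smult c g \<in> E" if "g \<in> E" for c g
    using that sm1 sm2 by (simp add: E_def)
  have E1: "sk_one \<in> E" using one1 one2 by (simp add: E_def sk_one_mono)
  have Ex1: "xmon (1,0) \<in> E" using e1 by (simp add: E_def sk_x1_mono)
  have Ex2: "xmon (0,1) \<in> E" using e2 by (simp add: E_def sk_x2_mono)
  have Ei: "xmon (i,0) \<in> E" for i
  proof (induction i)
    case 0 thus ?case using E1 by (simp add: sk_one_mono)
  next
    case (Suc i) show ?case unfolding mono_i0_mult[symmetric] by (rule Em[OF Suc Ex1])
  qed
  have Ej: "xmon (0,j) \<in> E" for j
  proof (induction j)
    case 0 thus ?case using E1 by (simp add: sk_one_mono)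
  next
    case (Suc j) show ?case unfolding mono_0j_mult[symmetric] by (rule Em[OF Suc Ex2])
  qed
  have Et: "xmon t \<in> E" for t
  proof -
    obtain i j where t: "t = (i,j)" by (cases t)
    show ?thesis using Em[OF Ei Ej] by (simp add: mono_ij_mult t)
  qed
  have E0: "(\<lambda>e. 0) \<in> E"
  proof -
    have "sk_smult 0 sk_one = (\<lambda>e. 0)" by (simp add: sk_smult_def)
    thus ?thesis using Es[OF E1, of 0] by simp
  qed
  have all: "\<forall>f. supp f \<subseteq> S \<longrightarrow> f \<in> E" if "finite S" for S
    by (rule skA_decomp_induct[where P="\<lambda>f. f \<in> E", OF that E0]) (auto intro!: Ea Es Et)
  show ?thesis
  proof (rule ext)
    fix f show "\<phi> f = \<psi> f"
    proof (cases "f \<in> skA")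
      case True
      hence "f \<in> E" using all[of "supp f"] by (simp add: skA_iff)
      thus ?thesis by (simp add: E_def)
    next
      case False
      thus ?thesis using ext1 ext2 by (simp add: extensional_def)
    qed
  qed
qed

lemma sk_x_1: "sk_x 1 = sk_x1" by (simp add: sk_x_def)
lemma sk_x_2: "sk_x 2 = sk_x2" by (simp add: sk_x_def)

lemma Mon_T_x1: "Mon \<alpha> \<beta> True sk_x1 = sk_smult \<alpha> sk_x2"
proof (rule ext)
  fix e :: "nat \<times> nat"
  obtain p q where e: "e = (p,q)" by (cases e)
  have h: "sk_x1 \<in> skA" by (simp add: sk_x1_mono)
  show "Mon \<alpha> \<beta> True sk_x1 e = sk_smult \<alpha> sk_x2 e"
    unfolding e Mon_app[OF h] by (auto simp: sk_x1_def sk_x2_def sk_smult_def)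
qed

lemma Mon_T_x2: "Mon \<alpha> \<beta> True sk_x2 = sk_smult \<beta> sk_x1"
proof (rule ext)
  fix e :: "nat \<times> nat"
  obtain p q where e: "e = (p,q)" by (cases e)
  have h: "sk_x2 \<in> skA" by (simp add: sk_x2_mono)
  show "Mon \<alpha> \<beta> True sk_x2 e = sk_smult \<beta> sk_x1 e"
    unfolding e Mon_app[OF h] by (auto simp: sk_x1_def sk_x2_def sk_smult_def)
qed

lemma sk_tau_eq:
  assumes mu: "\<mu> \<noteq> 0"
  shows "sk_tau 2 1 \<mu> = Mon (- inverse \<mu>) \<mu> True"
  unfolding sk_tau_def sk_x_1 sk_x_2
proof (rule the_equality)
  show "Mon (- inverse \<mu>) \<mu> True \<in> sk_aut_set \<and>
    Mon (- inverse \<mu>) \<mu> True sk_x2 = sk_smult \<mu> sk_x1 \<and>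
    Mon (- inverse \<mu>) \<mu> True sk_x1 = sk_smult (- inverse \<mu>) sk_x2"
    using mu by (simp add: Mon_aut Mon_T_x1 Mon_T_x2)
next
  fix \<phi> assume H: "\<phi> \<in> sk_aut_set \<and> \<phi> sk_x2 = sk_smult \<mu> sk_x1 \<and> \<phi> sk_x1 = sk_smult (- inverse \<mu>) sk_x2"
  show "\<phi> = Mon (- inverse \<mu>) \<mu> True"
    using H mu by (intro aut_determined) (simp_all add: Mon_aut Mon_T_x1 Mon_T_x2)
qed


lemma iso_set_sym_gen:
  assumes "h \<in> iso G H" and cl: "\<And>x y. x \<in> carrier G \<Longrightarrow> y \<in> carrier G \<Longrightarrow> x \<otimes>\<^bsub>G\<^esub> y \<in> carrier G"
  shows "inv_into (carrier G) h \<in> iso H G"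
proof -
  have h: "h \<in> hom G H" "bij_betw h (carrier G) (carrier H)"
    using assms by (auto simp add: iso_def bij_betw_inv_into)
  then have HG: "bij_betw (inv_into (carrier G) h) (carrier H) (carrier G)"
    by (simp add: bij_betw_inv_into)
  have "inv_into (carrier G) h \<in> hom H G"
    unfolding hom_def
  proof safe
    show *: "\<And>x. x \<in> carrier H \<Longrightarrow> inv_into (carrier G) h x \<in> carrier G"
      by (meson HG bij_betwE)
    show "inv_into (carrier G) h (x \<otimes>\<^bsub>H\<^esub> y) = inv_into (carrier G) h x \<otimes>\<^bsub>G\<^esub> inv_into (carrier G) h y"
      if "x \<in> carrier H" "y \<in> carrier H" for x y
    proof (rule inv_into_f_eq)
      show "inj_on h (carrier G)"
        using bij_betw_def h(2) by blast
      show "inv_into (carrier G) h x \<otimes>\<^bsub>G\<^esub> inv_into (carrier G) h y \<in> carrier G"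
        using * that cl by blast
      show "h (inv_into (carrier G) h x \<otimes>\<^bsub>G\<^esub> inv_into (carrier G) h y) = x \<otimes>\<^bsub>H\<^esub> y"
        using h bij_betw_inv_into_right [of h] unfolding hom_def by (simp add: "*" that)
    qed
  qed
  then show ?thesis
    by (simp add: Group.iso_def bij_betw_inv_into h)
qed


locale Qsetup =
  fixes m :: nat and lam :: complex
  assumes m1: "m \<ge> 1" and lp: "lam ^ (2 * m) = 1"
    and prim: "\<forall>k. 0 < k \<and> k < 2 * m \<longrightarrow> lam ^ k \<noteq> 1"
begin

definition w :: "int \<Rightarrow> complex" where "w i = lam powi i"

lemma lam0: "lam \<noteq> 0"
proof
  assume "lam = 0"
  moreover have "2 * m > 0" using m1 by simp
  ultimately show False using lp by (simp add: zero_power)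
qed

lemma w_add: "w (i + j) = w i * w j"
  unfolding w_def using lam0 by (simp add: power_int_add)

lemma w_neg: "w (- i) = inverse (w i)"
  unfolding w_def by (simp add: power_int_minus)

lemma w_diff: "w (i - j) = w i * inverse (w j)"
  using w_add[of i "-j"] w_neg[of j] by simp

lemma w_0[simp]: "w 0 = 1" by (simp add: w_def)
lemma w_1[simp]: "w 1 = lam" by (simp add: w_def)
lemma w_nat: "w (int k) = lam ^ k" by (simp add: w_def)

lemma w_nz: "w i \<noteq> 0"
proof
  assume "w i = 0"
  have "w (i + - i) = w i * w (- i)" by (rule w_add)
  also have "\<dots> = 0" using \<open>w i = 0\<close> by simp
  finally show False by simp
qed

lemma w_2m: "w (2 * int m * k) = 1"
proof -
  have "w (2 * int m * k) = (lam powi (2 * int m)) powi k" unfolding w_def by (rule power_int_mult)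
  also have "lam powi (2 * int m) = 1" using lp by (metis of_nat_mult of_nat_numeral power_int_of_nat)
  finally show ?thesis by simp
qed

lemma w_mod: "w (i mod (2 * int m)) = w i"
proof -
  have "i = 2 * int m * (i div (2 * int m)) + i mod (2 * int m)" by simp
  hence "w i = w (2 * int m * (i div (2 * int m))) * w (i mod (2 * int m))"
    by (metis w_add)
  thus ?thesis by (simp add: w_2m)
qed

lemma w_m: "w (int m) = -1"
proof -
  have "(lam ^ m) ^ 2 = 1" using lp by (simp add: power_mult[symmetric] mult.commute)
  hence "(lam ^ m - 1) * (lam ^ m + 1) = 0" by (simp add: algebra_simps power2_eq_square)
  moreover have "lam ^ m \<noteq> 1" using prim m1 by auto
  ultimately have "lam ^ m = -1" by (simp add: add_eq_0_iff2)
  thus ?thesis by (simp add: w_nat)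
qed

lemma w_inj:
  assumes "0 \<le> i" "i < 2 * int m" "0 \<le> j" "j < 2 * int m" "w i = w j"
  shows "i = j"
proof (rule ccontr)
  assume ne: "i \<noteq> j"
  { fix a b :: int assume ab: "0 \<le> a" "a < b" "b < 2 * int m" "w a = w b"
    have "w (b - a) = 1" using ab w_nz[of a] by (simp add: w_diff)
    moreover have "w (b - a) = lam ^ nat (b - a)" using ab by (metis w_nat int_nat_eq less_le_not_le diff_gt_0_iff_gt)
    moreover have "0 < nat (b - a)" "nat (b - a) < 2 * m" using ab by auto
    ultimately have False using prim by auto }
  note * = this
  show False
  proof (cases "i < j")
    case True thus False using * assms by blast
  next
    case False thus False using * assms ne by (metis linorder_neqE_linordered_idom)
  qed
qed

definition \<Phi> :: "int \<times> bool \<Rightarrow> (skpoly \<Rightarrow> skpoly)" where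
  "\<Phi> x = (case x of (i, e) \<Rightarrow> if e then Mon (- w (- i)) (w i) True else Mon (w i) (w (- i)) False)"

lemma \<Phi>_aut: "\<Phi> x \<in> sk_aut_set"
  unfolding \<Phi>_def by (auto split: prod.split intro!: Mon_aut simp: w_nz)

lemma \<Phi>_cong: "w i = w j \<Longrightarrow> \<Phi> (i, e) = \<Phi> (j, e)"
  by (simp add: \<Phi>_def w_neg)

lemma \<Phi>_mod: "\<Phi> (i mod (2 * int m), e) = \<Phi> (i, e)"
  by (rule \<Phi>_cong) (simp add: w_mod)

lemma \<Phi>_mult':
  "compose skA (\<Phi> (i, e)) (\<Phi> (j, f)) =
     (if \<not> e then \<Phi> (i + j, f) else if \<not> f then \<Phi> (i - j, True) else \<Phi> (i - j + int m, False))"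
  by (cases e; cases f) (simp_all add: \<Phi>_def Mon_comp w_add w_neg w_diff w_m mult_ac inverse_mult_distrib)

lemma \<Phi>_mult: "compose skA (\<Phi> x) (\<Phi> y) = \<Phi> (dicyclic_mult m x y)"
proof -
  obtain i e where x: "x = (i,e)" by (cases x)
  obtain j f where y: "y = (j,f)" by (cases y)
  show ?thesis unfolding x y \<Phi>_mult' dicyclic_mult_def by (simp add: \<Phi>_mod)
qed

end


context Qsetup begin

definition GG where "GG = subgroup_generated sk_Aut {sk_tau 2 1 1, sk_tau 2 1 lam}"
definition CC :: "(int \<times> bool) set" where "CC = {0..<2 * int m} \<times> UNIV"

lemma tau1: "sk_tau 2 1 1 = \<Phi> (0, True)"
  using sk_tau_eq[of 1] by (simp add: \<Phi>_def)

lemma taul: "sk_tau 2 1 lam = \<Phi> (1, True)"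
  using lam0 sk_tau_eq[of lam] by (simp add: \<Phi>_def w_neg)

lemma tau1': "sk_tau 2 (Suc 0) 1 = \<Phi> (0, True)" using tau1 by simp
lemma taul': "sk_tau 2 (Suc 0) lam = \<Phi> (1, True)" using taul by simp

lemma \<Phi>_one: "\<Phi> (0, False) = \<one>\<^bsub>sk_Aut\<^esub>"
  by (simp add: \<Phi>_def Mon_id sk_Aut_def)

lemma mult_Aut: "x \<otimes>\<^bsub>sk_Aut\<^esub> y = compose skA x y"
  by (simp add: sk_Aut_def)

lemma carr_Aut: "carrier sk_Aut = sk_aut_set"
  by (simp add: sk_Aut_def)

lemma dm_CC: "dicyclic_mult m x y \<in> CC"
proof -
  have p: "0 < 2 * int m" using m1 by simp
  obtain i e where x: "x = (i,e)" by (cases x)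
  obtain j f where y: "y = (j,f)" by (cases y)
  show ?thesis unfolding x y dicyclic_mult_def CC_def using p by auto
qed

lemma \<Phi>_2m: "\<Phi> (2 * int m, e) = \<Phi> (0, e)"
  by (rule \<Phi>_cong) (use w_2m[of 1] in simp)

lemma carrier_GG: "carrier GG = \<Phi> ` CC"
proof
  have p: "0 < 2 * int m" using m1 by simp
  have p1: "1 < 2 * int m" using m1 by simp
  show "carrier GG \<subseteq> \<Phi> ` CC"
  proof
    fix g assume "g \<in> carrier GG"
    hence "g \<in> generate sk_Aut (carrier sk_Aut \<inter> {sk_tau 2 1 1, sk_tau 2 1 lam})"
      by (simp add: GG_def carrier_subgroup_generated)
    thus "g \<in> \<Phi> ` CC"
    proof (induction rule: generate.induct)
      case one
      show ?case using p by (auto simp: \<Phi>_one[symmetric] CC_def intro!: image_eqI[where x="(0,False)"])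
    next
      case (incl h)
      hence "h = \<Phi> (0, True) \<or> h = \<Phi> (1, True)" by (auto simp: tau1 taul tau1' taul')
      thus ?case using p p1 by (auto simp: CC_def)
    next
      case (inv h)
      then obtain i where hi: "h = \<Phi> (i, True)" "0 \<le> i" "i < 2 * int m"
        using p p1 by (auto simp: tau1 taul tau1' taul')
      have "inv\<^bsub>sk_Aut\<^esub> h = \<Phi> (i + int m, True)"
        unfolding hi
      proof (rule group.inv_equality[OF group_sk_Aut])
        show "\<Phi> (i + int m, True) \<otimes>\<^bsub>sk_Aut\<^esub> \<Phi> (i, True) = \<one>\<^bsub>sk_Aut\<^esub>"
          unfolding mult_Aut \<Phi>_mult' \<Phi>_one[symmetric]
          using \<Phi>_2m[of False] by (simp add: algebra_simps mult_2)
        show "\<Phi> (i, True) \<in> carrier sk_Aut" "\<Phi> (i + int m, True) \<in> carrier sk_Aut"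
          by (simp_all add: carr_Aut \<Phi>_aut)
      qed
      also have "\<dots> = \<Phi> ((i + int m) mod (2 * int m), True)" by (simp add: \<Phi>_mod)
      finally show ?case using p by (auto simp: CC_def)
    next
      case (eng h1 h2)
      then obtain x y where "h1 = \<Phi> x" "h2 = \<Phi> y" by auto
      hence "h1 \<otimes>\<^bsub>sk_Aut\<^esub> h2 = \<Phi> (dicyclic_mult m x y)" by (simp add: mult_Aut \<Phi>_mult)
      thus ?case using dm_CC by auto
    qed
  qed
  show "\<Phi> ` CC \<subseteq> carrier GG"
  proof -
    let ?H = "carrier sk_Aut \<inter> {sk_tau 2 1 1, sk_tau 2 1 lam}"
    have gen: "generate sk_Aut ?H = carrier GG"
      by (simp add: GG_def carrier_subgroup_generated)
    have s: "\<Phi> (0, True) \<in> generate sk_Aut ?H"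
      by (rule generate.incl) (simp add: tau1 tau1' carr_Aut \<Phi>_aut)
    have r: "\<Phi> (1, True) \<in> generate sk_Aut ?H"
      by (rule generate.incl) (simp add: taul taul' carr_Aut \<Phi>_aut)
    have "((\<Phi> (1, True) \<otimes>\<^bsub>sk_Aut\<^esub> \<Phi> (0, True)) \<otimes>\<^bsub>sk_Aut\<^esub> \<Phi> (0, True)) \<otimes>\<^bsub>sk_Aut\<^esub> \<Phi> (0, True)
          \<in> generate sk_Aut ?H"
      by (intro generate.eng r s)
    moreover have "((\<Phi> (1, True) \<otimes>\<^bsub>sk_Aut\<^esub> \<Phi> (0, True)) \<otimes>\<^bsub>sk_Aut\<^esub> \<Phi> (0, True)) \<otimes>\<^bsub>sk_Aut\<^esub> \<Phi> (0, True)
          = \<Phi> (1 + 2 * int m, False)"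
      by (simp add: mult_Aut \<Phi>_mult' algebra_simps)
    moreover have "\<Phi> (1 + 2 * int m, False) = \<Phi> (1, False)"
      by (rule \<Phi>_cong) (simp add: w_add w_2m[of 1, simplified])
    ultimately have a: "\<Phi> (1, False) \<in> generate sk_Aut ?H" by simp
    have F: "\<Phi> (int k, False) \<in> generate sk_Aut ?H" for k
    proof (induction k)
      case 0 thus ?case using generate.one[of sk_Aut ?H] by (simp add: \<Phi>_one)
    next
      case (Suc k)
      have "\<Phi> (int k, False) \<otimes>\<^bsub>sk_Aut\<^esub> \<Phi> (1, False) \<in> generate sk_Aut ?H"
        by (rule generate.eng[OF Suc a])
      thus ?case unfolding mult_Aut \<Phi>_mult' by (simp add: add.commute)
    qed
    have T: "\<Phi> (int k, True) \<in> generate sk_Aut ?H" for k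
    proof -
      have "\<Phi> (int k, False) \<otimes>\<^bsub>sk_Aut\<^esub> \<Phi> (0, True) \<in> generate sk_Aut ?H"
        by (rule generate.eng[OF F s])
      thus ?thesis unfolding mult_Aut \<Phi>_mult' by simp
    qed
    show ?thesis
    proof
      fix g assume "g \<in> \<Phi> ` CC"
      then obtain i e where g: "g = \<Phi> (i, e)" and i: "0 \<le> i" by (auto simp: CC_def)
      obtain k where k: "i = int k" using i nonneg_eq_int by blast
      show "g \<in> carrier GG" unfolding gen[symmetric] g k using F T by (cases e) auto
    qed
  qed
qed

lemma Mon_F_x1: "Mon \<alpha> \<beta> False sk_x1 = sk_smult \<alpha> sk_x1"
proof (rule ext)
  fix e :: "nat \<times> nat"
  obtain p q where e: "e = (p,q)" by (cases e)
  have h: "sk_x1 \<in> skA" by (simp add: sk_x1_mono)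
  show "Mon \<alpha> \<beta> False sk_x1 e = sk_smult \<alpha> sk_x1 e"
    unfolding e Mon_app[OF h] by (auto simp: sk_x1_def sk_smult_def)
qed

lemma \<Phi>_x1: "\<Phi> (i, e) sk_x1 (1, 0) = (if e then 0 else w i)"
  "\<Phi> (i, e) sk_x1 (0, 1) = (if e then - w (- i) else 0)"
proof -
  have T: "\<Phi> (i, True) sk_x1 = sk_smult (- w (- i)) sk_x2"
    by (simp add: \<Phi>_def Mon_T_x1)
  have F: "\<Phi> (i, False) sk_x1 = sk_smult (w i) sk_x1"
    by (simp add: \<Phi>_def Mon_F_x1)
  show "\<Phi> (i, e) sk_x1 (1, 0) = (if e then 0 else w i)"
    by (cases e) (simp_all only: T F, simp_all add: sk_smult_def sk_x1_def sk_x2_def)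
  show "\<Phi> (i, e) sk_x1 (0, 1) = (if e then - w (- i) else 0)"
    by (cases e) (simp_all only: T F, simp_all add: sk_smult_def sk_x1_def sk_x2_def)
qed

lemma \<Phi>_inj: "inj_on \<Phi> CC"
proof
  fix x y assume x: "x \<in> CC" and y: "y \<in> CC" and eq: "\<Phi> x = \<Phi> y"
  obtain i e where xi: "x = (i,e)" by (cases x)
  obtain j f where yj: "y = (j,f)" by (cases y)
  have a: "(if e then 0 else w i) = (if f then 0 else w j)"
    using eq \<Phi>_x1(1)[of i e] \<Phi>_x1(1)[of j f] unfolding xi yj by simp
  have b: "(if e then - w (- i) else 0) = (if f then - w (- j) else 0)"
    using eq \<Phi>_x1(2)[of i e] \<Phi>_x1(2)[of j f] unfolding xi yj by simp
  have ef: "e = f" using a b w_nz by (cases e; cases f) auto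
  have "w i = w j"
  proof (cases e)
    case True
    with b ef have "inverse (w i) = inverse (w j)" by (simp add: w_neg)
    thus ?thesis by simp
  next
    case False
    with a ef show ?thesis by simp
  qed
  hence "i = j" using x y unfolding xi yj CC_def by (intro w_inj) auto
  thus "x = y" using ef xi yj by simp
qed

lemma \<Phi>_iso: "\<Phi> \<in> iso (dicyclic_group m) GG"
proof (rule isoI)
  show "\<Phi> \<in> hom (dicyclic_group m) GG"
    unfolding hom_def
  proof (intro CollectI conjI ballI)
    show "\<Phi> \<in> carrier (dicyclic_group m) \<rightarrow> carrier GG"
      by (auto simp: carrier_GG dicyclic_group_def CC_def)
    fix x y assume "x \<in> carrier (dicyclic_group m)" "y \<in> carrier (dicyclic_group m)"
    show "\<Phi> (x \<otimes>\<^bsub>dicyclic_group m\<^esub> y) = \<Phi> x \<otimes>\<^bsub>GG\<^esub> \<Phi> y"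
      by (simp add: dicyclic_group_def GG_def subgroup_generated_def sk_Aut_def \<Phi>_mult)
  qed
  show "bij_betw \<Phi> (carrier (dicyclic_group m)) (carrier GG)"
    unfolding bij_betw_def carrier_GG using \<Phi>_inj by (simp add: dicyclic_group_def CC_def)
qed

lemma GG_iso: "GG \<cong> dicyclic_group m"
proof -
  have "inv_into (carrier (dicyclic_group m)) \<Phi> \<in> iso GG (dicyclic_group m)"
    by (rule iso_set_sym_gen[OF \<Phi>_iso])
       (simp add: dicyclic_group_def dm_CC[unfolded CC_def])
  thus ?thesis by (rule is_isoI)
qed

end


definition BB :: "nat \<times> nat \<Rightarrow> skpoly" where
  "BB t = (\<lambda>e. if e = t \<or> e = prod.swap t then 1 else 0)"

lemma BB_skA: "BB t \<in> skA"
proof -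
  have "supp (BB t) \<subseteq> {t, prod.swap t}" by (auto simp: supp_def BB_def)
  thus ?thesis by (simp add: skA_iff finite_subset)
qed

lemma sk_pow_Suc: "sk_pow f (Suc n) = sk_mult f (sk_pow f n)"
  by (simp add: sk_pow_def)

lemma sk_pow_x1: "sk_pow sk_x1 n = xmon (n, 0)"
proof (induction n)
  case 0 thus ?case by (simp add: sk_pow_def sk_one_mono)
next
  case (Suc n) thus ?case by (simp add: sk_pow_Suc sk_x1_mono sk_mult_xmon_xmon)
qed

lemma sk_pow_x2: "sk_pow sk_x2 n = xmon (0, n)"
proof (induction n)
  case 0 thus ?case by (simp add: sk_pow_def sk_one_mono)
next
  case (Suc n) thus ?case by (simp add: sk_pow_Suc sk_x2_mono sk_mult_xmon_xmon)
qed

lemma u_eq: "sk_mult sk_x1 sk_x2 = xmon (1, 1)"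
  by (simp add: sk_x1_mono sk_x2_mono sk_mult_xmon_xmon)

lemma sk_mult_add_left: "sk_mult (sk_add f g) h = sk_add (sk_mult f h) (sk_mult g h)"
  by (auto simp: fun_eq_iff sk_mult_def sk_add_def algebra_simps sum.distrib)

lemma Mon_xmon: "Mon \<alpha> \<beta> b (xmon (p0, q0)) =
   (if b then sk_smult ((-1)^(p0 * q0) * \<alpha>^p0 * \<beta>^q0) (xmon (q0, p0))
    else sk_smult (\<alpha>^p0 * \<beta>^q0) (xmon (p0, q0)))"
proof (rule ext)
  fix e :: "nat \<times> nat"
  obtain p q where e: "e = (p,q)" by (cases e)
  have h: "xmon (p0, q0) \<in> skA" by simp
  show "Mon \<alpha> \<beta> b (xmon (p0, q0)) e = (if b then sk_smult ((-1)^(p0 * q0) * \<alpha>^p0 * \<beta>^q0) (xmon (q0, p0))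
    else sk_smult (\<alpha>^p0 * \<beta>^q0) (xmon (p0, q0))) e"
    unfolding e Mon_app[OF h] by (cases b) (auto simp: xmon_def sk_smult_def mult.commute)
qed


lemma sk_smult_1: "sk_smult 1 f = f" by (simp add: sk_smult_def)
lemma sk_add_comm: "sk_add f g = sk_add g f" by (simp add: sk_add_def fun_eq_iff add.commute)

definition PP :: "nat \<Rightarrow> skpoly" where "PP N = sk_add (xmon (N, 0)) (xmon (0, N))"

lemma alg_skA: "f \<in> sk_alg_gen S \<Longrightarrow> S \<subseteq> skA \<Longrightarrow> f \<in> skA"
  by (induction rule: sk_alg_gen.induct) (auto simp: sk_one_mono)

lemma alg_fix:
  assumes ph: "\<phi> \<in> sk_aut_set" and S: "S \<subseteq> skA" and fixS: "\<forall>s\<in>S. \<phi> s = s"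
    and f: "f \<in> sk_alg_gen S"
  shows "\<phi> f = f"
proof -
  have add: "\<forall>f\<in>skA. \<forall>g\<in>skA. \<phi> (sk_add f g) = sk_add (\<phi> f) (\<phi> g)"
    and sm: "\<forall>c. \<forall>f\<in>skA. \<phi> (sk_smult c f) = sk_smult c (\<phi> f)"
    and mu: "\<forall>f\<in>skA. \<forall>g\<in>skA. \<phi> (sk_mult f g) = sk_mult (\<phi> f) (\<phi> g)"
    and one: "\<phi> sk_one = sk_one"
    using ph unfolding sk_aut_set_def by blast+
  have o: "sk_one \<in> skA" by (simp add: sk_one_mono)
  from f show ?thesis
  proof (induction rule: sk_alg_gen.induct)
    case (scalar c) thus ?case using sm o one by simp
  next
    case (gen s) thus ?case using fixS by simp
  next
    case (add f g)
    have "f \<in> skA" "g \<in> skA" using add.hyps S alg_skA by blast+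
    thus ?case using add.IH \<open>\<forall>f\<in>skA. \<forall>g\<in>skA. \<phi> (sk_add f g) = sk_add (\<phi> f) (\<phi> g)\<close> by simp
  next
    case (mult f g)
    have "f \<in> skA" "g \<in> skA" using mult.hyps S alg_skA by blast+
    thus ?case using mult.IH mu by simp
  qed
qed

context Qsetup begin

abbreviation "uu \<equiv> sk_mult sk_x1 sk_x2"
abbreviation "vv \<equiv> sk_add (sk_pow sk_x1 (2 * m)) (sk_pow sk_x2 (2 * m))"
abbreviation "AL \<equiv> sk_alg_gen {uu, vv}"

lemma vv_eq: "vv = PP (2 * m)" by (simp add: PP_def sk_pow_x1 sk_pow_x2)

lemma w_pow: "w i ^ k = w (int k * i)"
proof (induction k)
  case 0 thus ?case by simp
next
  case (Suc k)
  have "w (int (Suc k) * i) = w (i + int k * i)" by (simp add: algebra_simps)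
  thus ?case using Suc by (simp add: w_add)
qed

lemma w_pow2m: "w i ^ (2 * m) = 1"
  using w_2m[of i] by (simp add: w_pow)

lemma negw_pow2m: "(- w i) ^ (2 * m) = 1"
proof -
  have "(- w i) ^ (2 * m) = w i ^ (2 * m)" by (simp add: power_mult power2_eq_square[symmetric])
  thus ?thesis by (simp add: w_pow2m)
qed

lemma \<Phi>_fix_u: "\<Phi> x uu = uu"
proof -
  obtain i e where x: "x = (i,e)" by (cases x)
  have "w i * inverse (w i) = 1" using w_nz by simp
  thus ?thesis unfolding x u_eq
    by (cases e) (simp_all add: \<Phi>_def Mon_xmon w_neg sk_smult_1 mult.commute)
qed

lemma \<Phi>_fix_v: "\<Phi> x vv = vv"
proof -
  obtain i e where x: "x = (i,e)" by (cases x)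
  have a: "\<Phi> x (PP (2 * m)) = sk_add (\<Phi> x (xmon (2 * m, 0))) (\<Phi> x (xmon (0, 2 * m)))"
    unfolding PP_def x \<Phi>_def by (simp add: Mon_add)
  show ?thesis unfolding vv_eq a unfolding x PP_def
    by (cases e) (simp_all add: \<Phi>_def Mon_xmon w_pow2m negw_pow2m sk_smult_1 sk_add_comm)
qed

lemma gens_skA: "{uu, vv} \<subseteq> skA"
  by (simp add: vv_eq PP_def u_eq)

lemma AL_skA: "f \<in> AL \<Longrightarrow> f \<in> skA"
  using alg_skA gens_skA by blast

lemma AL_sub_inv: "AL \<subseteq> sk_invariants GG"
proof
  fix f assume f: "f \<in> AL"
  have "g f = f" if gG: "g \<in> carrier GG" for g
  proof -
    obtain x where g: "g = \<Phi> x" using gG carrier_GG by auto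
    show ?thesis unfolding g
      by (rule alg_fix[OF \<Phi>_aut gens_skA _ f]) (simp add: \<Phi>_fix_u \<Phi>_fix_v)
  qed
  thus "f \<in> sk_invariants GG" using AL_skA[OF f] by (simp add: sk_invariants_def)
qed

end


lemma m1_pow_even: "even n \<Longrightarrow> (-1::complex) ^ n = 1"
  by (simp add: minus_one_power_iff)

context Qsetup begin

lemma AL_scalar: "sk_smult c sk_one \<in> AL" by (rule sk_alg_gen.scalar)

lemma AL_smult: "f \<in> AL \<Longrightarrow> sk_smult c f \<in> AL"
  using sk_alg_gen.mult[OF AL_scalar] by (simp add: sk_mult_const)

lemma AL_zero: "(\<lambda>e. 0) \<in> AL"
proof -
  have "sk_smult 0 sk_one = (\<lambda>e. 0)" by (simp add: sk_smult_def)
  thus ?thesis using AL_scalar[of 0] by simp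
qed

lemma AL_diag: "xmon (k, k) \<in> AL"
proof (induction k)
  case 0
  show ?case using AL_scalar[of 1] by (simp add: sk_smult_1 sk_one_mono)
next
  case (Suc k)
  have u: "uu \<in> AL" by (rule sk_alg_gen.gen) simp
  have "sk_smult ((-1)^k) (sk_mult (xmon (k,k)) uu) \<in> AL"
    by (intro AL_smult sk_alg_gen.mult Suc u)
  moreover have "sk_smult ((-1)^k) (sk_mult (xmon (k,k)) uu) = xmon (Suc k, Suc k)"
  proof -
    have "(-1::complex)^k * (-1)^k = 1" by (simp add: power_add[symmetric] m1_pow_even)
    thus ?thesis unfolding u_eq sk_mult_xmon_xmon by (simp add: sk_smult_def fun_eq_iff mult.assoc)
  qed
  ultimately show ?case by simp
qed

lemma PP_0: "PP 0 \<in> AL"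
proof -
  have "sk_smult 2 sk_one = PP 0" by (auto simp: fun_eq_iff PP_def sk_add_def sk_smult_def sk_one_def xmon_def)
  thus ?thesis using AL_scalar[of 2] by simp
qed

lemma PP_2m: "PP (2 * m) \<in> AL"
  unfolding vv_eq[symmetric] by (rule sk_alg_gen.gen) simp

lemma m1_2m: "(-1::complex) ^ (2 * m * x) = 1"
  by (simp add: m1_pow_even)

lemma PP_rec: "PP (N + 4 * m) = sk_add (sk_mult (PP (2 * m)) (PP (N + 2 * m)))
                  (sk_smult (-1) (sk_mult (xmon (2 * m, 2 * m)) (PP N)))"
proof (rule ext)
  fix e :: "nat \<times> nat"
  obtain i j where e: "e = (i,j)" by (cases e)
  have mpos: "0 < m" using m1 by simp
  show "PP (N + 4 * m) e = sk_add (sk_mult (PP (2 * m)) (PP (N + 2 * m)))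
                  (sk_smult (-1) (sk_mult (xmon (2 * m, 2 * m)) (PP N))) e"
    unfolding e PP_def[of "2 * m"] sk_mult_add_left
    apply (simp only: sk_add_def sk_smult_def sk_mult_xmon_left)
    using mpos
    by (auto simp: sk_add_def PP_def xmon_def m1_2m split: if_splits)
qed

end


lemma BB_swap: "BB (q, p) = BB (p, q)"
  by (auto simp: BB_def fun_eq_iff)

context Qsetup begin

lemma PP_AL: "PP (2 * m * r) \<in> AL \<and> PP (2 * m * (r + 1)) \<in> AL"
proof (induction r)
  case 0 thus ?case using PP_0 PP_2m by simp
next
  case (Suc r)
  have P1: "PP (2 * m * r + 4 * m) \<in> AL"
    unfolding PP_rec
    using Suc PP_2m
    by (intro sk_alg_gen.add sk_alg_gen.mult AL_smult AL_diag) (simp_all add: algebra_simps)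
  have eq: "2 * m * (Suc r + 1) = 2 * m * r + 4 * m" by (simp add: algebra_simps)
  have A: "PP (2 * m * (Suc r + 1)) \<in> AL" unfolding eq by (rule P1)
  have B: "PP (2 * m * Suc r) \<in> AL" using Suc by (simp add: algebra_simps)
  show ?case using A B by blast
qed

lemma BB_shift:
  assumes "0 < r"
  shows "BB (k, k + 2 * m * r) = sk_mult (xmon (k, k)) (PP (2 * m * r))"
proof (rule ext)
  fix e :: "nat \<times> nat"
  obtain i j where e: "e = (i,j)" by (cases e)
  have mpos: "0 < m" using m1 by simp
  have sg: "(-1::complex) ^ (k * (2 * m * r)) = 1" by (simp add: m1_pow_even)
  show "BB (k, k + 2 * m * r) e = sk_mult (xmon (k, k)) (PP (2 * m * r)) e"
    unfolding e sk_mult_xmon_left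
    using mpos assms sg
    by (auto simp: BB_def PP_def sk_add_def xmon_def split: if_splits)
qed

lemma BB_AL:
  assumes "(2 * int m) dvd (int q - int p)"
  shows "BB (p, q) \<in> AL"
proof -
  { fix p q :: nat assume pq: "p \<le> q" and d: "(2 * int m) dvd (int q - int p)"
    have "BB (p, q) \<in> AL"
    proof (cases "p = q")
      case True
      have "BB (p, p) = xmon (p, p)" by (auto simp: BB_def xmon_def fun_eq_iff)
      thus ?thesis using True AL_diag by simp
    next
      case False
      obtain r where r: "int q - int p = 2 * int m * r" using d by (auto elim: dvdE)
      have "r > 0"
      proof -
        have "int q - int p > 0" using pq False by simp
        hence "2 * int m * r > 0" using r by simp
        thus ?thesis using m1 by (simp add: zero_less_mult_iff)
      qed
      then obtain r' where r': "r = int r'" "0 < r'" by (metis zero_less_imp_eq_int of_nat_0_less_iff)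
      have "int q = int (p + 2 * m * r')" using r r' by simp
      hence q: "q = p + 2 * m * r'" by (simp only: of_nat_eq_iff)
      show ?thesis unfolding q BB_shift[OF r'(2)]
        by (intro sk_alg_gen.mult AL_diag) (use PP_AL[of r'] in simp)
    qed }
  note * = this
  show ?thesis
  proof (cases "p \<le> q")
    case True thus ?thesis using * assms by blast
  next
    case False
    have "(2 * int m) dvd (int p - int q)" using assms by (metis dvd_minus_iff minus_diff_eq)
    thus ?thesis using *[of q p] False BB_swap by simp
  qed
qed

lemma inv_AL:
  assumes "finite S"
  shows "\<forall>f. supp f \<subseteq> S \<and> (\<forall>p q. f (p,q) \<noteq> 0 \<longrightarrow> (2 * int m) dvd (int q - int p))
             \<and> (\<forall>p q. f (q,p) = f (p,q)) \<longrightarrow> f \<in> AL"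
  using assms
proof (induction S rule: finite_induct)
  case empty
  show ?case
  proof (intro allI impI)
    fix f assume "supp f \<subseteq> {} \<and> (\<forall>p q. f (p,q) \<noteq> 0 \<longrightarrow> (2 * int m) dvd (int q - int p))
             \<and> (\<forall>p q. f (q,p) = f (p,q))"
    hence "f = (\<lambda>e. 0)" by (auto simp: supp_def fun_eq_iff)
    thus "f \<in> AL" using AL_zero by simp
  qed
next
  case (insert t S)
  show ?case
  proof (intro allI impI)
    fix f assume H: "supp f \<subseteq> insert t S \<and> (\<forall>p q. f (p,q) \<noteq> 0 \<longrightarrow> (2 * int m) dvd (int q - int p))
             \<and> (\<forall>p q. f (q,p) = f (p,q))"
    obtain p q where t: "t = (p,q)" by (cases t)
    show "f \<in> AL"
    proof (cases "f t = 0")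
      case True
      hence "supp f \<subseteq> S" using H by (auto simp: supp_def)
      thus ?thesis using insert.IH H by blast
    next
      case False
      define f' where "f' = (\<lambda>e. if e = (p,q) \<or> e = (q,p) then 0 else f e)"
      have "supp f' \<subseteq> S"
      proof
        fix e assume "e \<in> supp f'"
        thus "e \<in> S" using H by (auto simp: supp_def f'_def t split: if_splits)
      qed
      moreover have "\<forall>p q. f' (p,q) \<noteq> 0 \<longrightarrow> (2 * int m) dvd (int q - int p)"
        using H by (auto simp: f'_def)
      moreover have "\<forall>a b. f' (b,a) = f' (a,b)"
        using H by (auto simp: f'_def)
      ultimately have "f' \<in> AL" using insert.IH by blast
      moreover have "BB (p,q) \<in> AL" using H False t by (intro BB_AL) auto
      ultimately have "sk_add f' (sk_smult (f (p,q)) (BB (p,q))) \<in> AL"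
        by (intro sk_alg_gen.add AL_smult)
      moreover have "sk_add f' (sk_smult (f (p,q)) (BB (p,q))) = f"
      proof (rule ext)
        fix e :: "nat \<times> nat"
        obtain a b where e: "e = (a,b)" by (cases e)
        show "sk_add f' (sk_smult (f (p,q)) (BB (p,q))) e = f e"
          unfolding e using H by (auto simp: sk_add_def sk_smult_def BB_def f'_def)
      qed
      ultimately show ?thesis by simp
    qed
  qed
qed

lemma inv_sub_AL: "sk_invariants GG \<subseteq> AL"
proof
  fix f assume f: "f \<in> sk_invariants GG"
  hence fA: "f \<in> skA" and fx: "\<forall>g\<in>carrier GG. g f = f" by (auto simp: sk_invariants_def)
  have c1: "\<Phi> (1, False) \<in> carrier GG" using m1 by (auto simp: carrier_GG CC_def)
  have c0: "\<Phi> (0, True) \<in> carrier GG" using m1 by (auto simp: carrier_GG CC_def)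
  have e1: "Mon lam (inverse lam) False f = f" using fx c1 by (simp add: \<Phi>_def w_neg)
  have e0: "Mon (-1) 1 True f = f" using fx c0 by (simp add: \<Phi>_def)
  have dv: "(2 * int m) dvd (int q - int p)" if nz: "f (p,q) \<noteq> 0" for p q
  proof -
    have "lam ^ p * inverse lam ^ q * f (p,q) = f (p,q)"
      using e1 Mon_app[OF fA, of lam "inverse lam" False p q] by simp
    hence "lam ^ p * inverse lam ^ q = 1" using nz by simp
    hence "lam ^ p = lam ^ q" using lam0
      by (metis mult.assoc mult.right_neutral power_inverse right_inverse power_not_zero mult.commute)
    hence "w (int q - int p) = 1" using lam0 by (simp add: w_diff w_nat)
    hence "w ((int q - int p) mod (2 * int m)) = w 0" by (simp add: w_mod)
    hence "(int q - int p) mod (2 * int m) = 0" using m1 by (intro w_inj) auto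
    thus ?thesis by (simp add: dvd_eq_mod_eq_0)
  qed
  have sym1: "f (q,p) = f (p,q)" if nz: "f (p,q) \<noteq> 0" for p q
  proof -
    have "even (int q - int p)" using dv[OF nz] by (metis dvd_mult_left dvd_trans even_numeral mult_2)
    hence "even p = even q" by auto
    hence ev: "even (p * q + q)" by auto
    have "(-1) ^ (p * q) * (-1) ^ q * f (q,p) = f (p,q)"
      using e0 Mon_app[OF fA, of "-1" 1 True p q] by simp
    moreover have "(-1::complex) ^ (p * q) * (-1) ^ q = 1"
      using ev by (simp add: power_add[symmetric] m1_pow_even)
    ultimately show ?thesis by simp
  qed
  have sym: "\<forall>p q. f (q,p) = f (p,q)"
  proof (intro allI)
    fix p q show "f (q,p) = f (p,q)"
      using sym1[of p q] sym1[of q p] by fastforce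
  qed
  have "finite (supp f)" using fA by (simp add: skA_iff)
  thus "f \<in> AL" using inv_AL[of "supp f"] dv sym by blast
qed

lemma invariants_eq: "sk_invariants GG = AL"
  using inv_sub_AL AL_sub_inv by blast

end


context Qsetup begin

lemma group_GG: "group GG"
  unfolding GG_def by (rule group.group_subgroup_generated[OF group_sk_Aut])

lemma mult_GG: "x \<otimes>\<^bsub>GG\<^esub> y = compose skA x y"
  by (simp add: GG_def subgroup_generated_def sk_Aut_def)

lemma one_GG: "\<one>\<^bsub>GG\<^esub> = \<Phi> (0, False)"
  by (simp add: GG_def subgroup_generated_def \<Phi>_one)

lemma card_CC: "card CC = 4 * m"
  by (simp add: CC_def card_cartesian_product)

lemma card_GG: "card (carrier GG) = 4 * m"
  using card_image[OF \<Phi>_inj] by (simp add: carrier_GG card_CC)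

lemma finite_GG: "finite (carrier GG)"
  by (simp add: carrier_GG CC_def)

lemma CC_mod: "(i mod (2 * int m), e) \<in> CC"
  using m1 by (simp add: CC_def)

lemma \<Phi>_eq_iff: "x \<in> CC \<Longrightarrow> y \<in> CC \<Longrightarrow> \<Phi> x = \<Phi> y \<longleftrightarrow> x = y"
  using \<Phi>_inj by (auto simp: inj_on_def)

lemma GG_invol_unique:
  assumes x: "x \<in> carrier GG" and y: "y \<in> carrier GG"
    and xx: "x \<otimes>\<^bsub>GG\<^esub> x = \<one>\<^bsub>GG\<^esub>" and yy: "y \<otimes>\<^bsub>GG\<^esub> y = \<one>\<^bsub>GG\<^esub>"
    and x1: "x \<noteq> \<one>\<^bsub>GG\<^esub>" and y1: "y \<noteq> \<one>\<^bsub>GG\<^esub>"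
  shows "x = y"
proof -
  have mpos: "0 < m" using m1 by simp
  have key: "z = \<Phi> (int m, False)" if z: "z \<in> carrier GG" and zz: "z \<otimes>\<^bsub>GG\<^esub> z = \<one>\<^bsub>GG\<^esub>"
     and z1: "z \<noteq> \<one>\<^bsub>GG\<^esub>" for z
  proof -
    obtain i e where zi: "z = \<Phi> (i,e)" and iC: "(i,e) \<in> CC" using z carrier_GG by auto
    have C0: "(0, False) \<in> CC" using mpos by (simp add: CC_def)
    have Cm: "(int m, False) \<in> CC" using mpos by (simp add: CC_def)
    show ?thesis
    proof (cases e)
      case True
      have A: "\<Phi> (i,e) \<otimes>\<^bsub>GG\<^esub> \<Phi> (i,e) = \<Phi> (int m, False)"
        unfolding mult_GG \<Phi>_mult' using True by simp
      have B: "\<Phi> (int m, False) \<noteq> \<Phi> (0, False)"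
        using \<Phi>_eq_iff[OF Cm C0] mpos by simp
      have zz': "\<Phi> (i,e) \<otimes>\<^bsub>GG\<^esub> \<Phi> (i,e) = \<Phi> (0, False)"
        using zz unfolding zi one_GG .
      from A B zz' have False by simp
      thus ?thesis ..
    next
      case False
      have "\<Phi> (i + i, False) = \<Phi> (0, False)"
        using zz zi False by (simp add: mult_GG \<Phi>_mult' one_GG)
      hence "\<Phi> ((i + i) mod (2 * int m), False) = \<Phi> (0, False)" unfolding \<Phi>_mod .
      hence "((i + i) mod (2 * int m), False) = (0, False)" using \<Phi>_eq_iff[OF CC_mod[of "i+i" False] C0] by blast
      hence md: "(2 * int m) dvd (i + i)" by (simp only: prod.inject dvd_eq_mod_eq_0)
      have i0: "0 \<le> i" "i < 2 * int m" using iC by (auto simp: CC_def)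
      have "i \<noteq> 0" using z1 zi False one_GG by auto
      have "i = int m"
      proof -
        from md obtain k where k: "i + i = 2 * int m * k" by (rule dvdE)
        hence ik: "i = int m * k" by simp
        have "0 < k"
        proof (rule ccontr)
          assume "\<not> 0 < k"
          hence "int m * k \<le> 0" using mpos by (simp add: mult_nonneg_nonpos)
          thus False using ik i0 \<open>i \<noteq> 0\<close> by simp
        qed
        moreover have "k < 2"
        proof (rule ccontr)
          assume "\<not> k < 2"
          hence "int m * 2 \<le> int m * k" using mpos by (intro mult_left_mono) auto
          thus False using ik i0 by linarith
        qed
        ultimately have "k = 1" by simp
        thus ?thesis using ik by simp
      qed
      thus ?thesis using zi False by simp
    qed
  qed
  show ?thesis using key[OF x xx x1] key[OF y yy y1] by simp
qed

lemma GG_nonabelian: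
  assumes m2: "m \<ge> 2"
  shows "\<Phi> (1, False) \<otimes>\<^bsub>GG\<^esub> \<Phi> (0, True) \<noteq> \<Phi> (0, True) \<otimes>\<^bsub>GG\<^esub> \<Phi> (1, False)"
proof -
  have a: "\<Phi> (1, False) \<otimes>\<^bsub>GG\<^esub> \<Phi> (0, True) = \<Phi> (1, True)" by (simp add: mult_GG \<Phi>_mult')
  have b: "\<Phi> (0, True) \<otimes>\<^bsub>GG\<^esub> \<Phi> (1, False) = \<Phi> ((-1) mod (2 * int m), True)"
    by (simp add: mult_GG \<Phi>_mult' \<Phi>_mod)
  have C1: "(1, True) \<in> CC" using m2 by (simp add: CC_def)
  have ne: "(1::int) \<noteq> (-1) mod (2 * int m)"
  proof -
    have "(-1) mod (2 * int m) = 2 * int m - 1" using m2 by (simp add: zmod_minus1)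
    thus ?thesis using m2 by simp
  qed
  show ?thesis unfolding a b using \<Phi>_eq_iff[OF C1 CC_mod] ne by simp
qed

lemma GG_elems:
  "\<Phi> (1, False) \<in> carrier GG" "\<Phi> (0, True) \<in> carrier GG"
  using m1 by (auto simp: carrier_GG CC_def)

lemma not_iso_comm:
  assumes m2: "m \<ge> 2" and iso: "h \<in> iso GG H"
    and comm: "\<And>a b. a \<in> carrier H \<Longrightarrow> b \<in> carrier H \<Longrightarrow> a \<otimes>\<^bsub>H\<^esub> b = b \<otimes>\<^bsub>H\<^esub> a"
  shows False
proof -
  have hom: "h \<in> hom GG H" and inj: "inj_on h (carrier GG)" using iso by (auto simp: iso_def bij_betw_def)
  let ?x = "\<Phi> (1, False)" and ?y = "\<Phi> (0, True)"
  have xy: "?x \<otimes>\<^bsub>GG\<^esub> ?y \<in> carrier GG" "?y \<otimes>\<^bsub>GG\<^esub> ?x \<in> carrier GG"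
    using GG_elems group.subgroupE(4)[OF group_GG group.subgroup_self[OF group_GG]] by blast+
  have "h (?x \<otimes>\<^bsub>GG\<^esub> ?y) = h ?x \<otimes>\<^bsub>H\<^esub> h ?y" using hom GG_elems by (simp add: hom_mult)
  also have "\<dots> = h ?y \<otimes>\<^bsub>H\<^esub> h ?x" using comm hom GG_elems by (simp add: hom_in_carrier)
  also have "\<dots> = h (?y \<otimes>\<^bsub>GG\<^esub> ?x)" using hom GG_elems by (simp add: hom_mult)
  finally have "?x \<otimes>\<^bsub>GG\<^esub> ?y = ?y \<otimes>\<^bsub>GG\<^esub> ?x" using inj xy by (simp add: inj_on_def)
  thus False using GG_nonabelian[OF m2] by simp
qed

lemma not_iso_card:
  assumes iso: "h \<in> iso GG H" and c: "finite (carrier H)" "card (carrier H) \<noteq> 4 * m"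
  shows False
proof -
  have "bij_betw h (carrier GG) (carrier H)" using iso by (simp add: iso_def)
  hence "card (carrier GG) = card (carrier H)" by (rule bij_betw_same_card)
  thus False using c card_GG by simp
qed

lemma not_iso_invol:
  assumes iso: "h \<in> iso GG H"
    and oneH: "\<one>\<^bsub>H\<^esub> \<in> carrier H" and rn: "\<And>z. z \<in> carrier H \<Longrightarrow> z \<otimes>\<^bsub>H\<^esub> \<one>\<^bsub>H\<^esub> = z"
    and a: "a \<in> carrier H" "a \<noteq> \<one>\<^bsub>H\<^esub>" "a \<otimes>\<^bsub>H\<^esub> a = \<one>\<^bsub>H\<^esub>"
    and b: "b \<in> carrier H" "b \<noteq> \<one>\<^bsub>H\<^esub>" "b \<otimes>\<^bsub>H\<^esub> b = \<one>\<^bsub>H\<^esub>"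
    and ab: "a \<noteq> b"
  shows False
proof -
  interpret G: group GG by (rule group_GG)
  have hom: "h \<in> hom GG H" and bij: "bij_betw h (carrier GG) (carrier H)" using iso by (auto simp: iso_def)
  have inj: "inj_on h (carrier GG)" using bij by (simp add: bij_betw_def)
  have surj: "h ` carrier GG = carrier H" using bij by (simp add: bij_betw_def)
  have hm: "\<And>x y. x \<in> carrier GG \<Longrightarrow> y \<in> carrier GG \<Longrightarrow> h (x \<otimes>\<^bsub>GG\<^esub> y) = h x \<otimes>\<^bsub>H\<^esub> h y"
    using hom unfolding hom_def by blast
  have hc: "\<And>x. x \<in> carrier GG \<Longrightarrow> h x \<in> carrier H"
    using hom unfolding hom_def by blast
  have h1: "h \<one>\<^bsub>GG\<^esub> = \<one>\<^bsub>H\<^esub>"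
  proof -
    from oneH surj obtain u where u: "u \<in> carrier GG" "h u = \<one>\<^bsub>H\<^esub>" by (metis imageE)
    have "h (\<one>\<^bsub>GG\<^esub> \<otimes>\<^bsub>GG\<^esub> u) = h \<one>\<^bsub>GG\<^esub> \<otimes>\<^bsub>H\<^esub> h u" by (rule hm[OF G.one_closed u(1)])
    hence "\<one>\<^bsub>H\<^esub> = h \<one>\<^bsub>GG\<^esub> \<otimes>\<^bsub>H\<^esub> \<one>\<^bsub>H\<^esub>" using u by (simp only: G.l_one)
    also have "\<dots> = h \<one>\<^bsub>GG\<^esub>" by (rule rn[OF hc[OF G.one_closed]])
    finally show ?thesis by (rule sym)
  qed
  have pre: "\<exists>x\<in>carrier GG. x \<noteq> \<one>\<^bsub>GG\<^esub> \<and> x \<otimes>\<^bsub>GG\<^esub> x = \<one>\<^bsub>GG\<^esub> \<and> h x = c"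
    if c: "c \<in> carrier H" "c \<noteq> \<one>\<^bsub>H\<^esub>" "c \<otimes>\<^bsub>H\<^esub> c = \<one>\<^bsub>H\<^esub>" for c
  proof -
    from c(1) surj obtain x where x: "x \<in> carrier GG" "h x = c" by (metis imageE)
    have "h (x \<otimes>\<^bsub>GG\<^esub> x) = h \<one>\<^bsub>GG\<^esub>" using hm[OF x(1) x(1)] x(2) c(3) h1 by simp
    moreover have "x \<otimes>\<^bsub>GG\<^esub> x \<in> carrier GG" by (rule G.m_closed[OF x(1) x(1)])
    ultimately have "x \<otimes>\<^bsub>GG\<^esub> x = \<one>\<^bsub>GG\<^esub>" using inj G.one_closed by (meson inj_onD)
    moreover have "x \<noteq> \<one>\<^bsub>GG\<^esub>" using x c h1 by auto
    ultimately show ?thesis using x by blast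
  qed
  obtain x where x: "x \<in> carrier GG" "x \<noteq> \<one>\<^bsub>GG\<^esub>" "x \<otimes>\<^bsub>GG\<^esub> x = \<one>\<^bsub>GG\<^esub>" "h x = a"
    using pre[OF a] by blast
  obtain y where y: "y \<in> carrier GG" "y \<noteq> \<one>\<^bsub>GG\<^esub>" "y \<otimes>\<^bsub>GG\<^esub> y = \<one>\<^bsub>GG\<^esub>" "h y = b"
    using pre[OF b] by blast
  have "x = y" using GG_invol_unique x y by blast
  thus False using x y ab by simp
qed

lemma not_iso_cyclic:
  assumes m2: "m \<ge> 2" and H: "group H" "cyclic_group H"
  shows "\<not> GG \<cong> H"
proof
  assume "GG \<cong> H"
  then obtain h where h: "h \<in> iso GG H" by (auto simp: is_iso_def)
  have "comm_group H" using H by (simp add: group.cyclic_imp_abelian_group)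
  hence cm: "comm_monoid H" by (simp add: comm_group_def)
  show False using not_iso_comm[OF m2 h] comm_monoid.m_comm[OF cm] by blast
qed

lemma not_iso_sym:
  assumes m2: "m \<ge> 2"
  shows "\<not> GG \<cong> sym_group n"
proof
  assume "GG \<cong> sym_group n"
  then obtain h where h: "h \<in> iso GG (sym_group n)" by (auto simp: is_iso_def)
  show False
  proof (cases "n \<ge> 3")
    case True
    let ?a = "transpose (1::nat) 2" and ?b = "transpose (1::nat) 3"
    have pa: "?a permutes {1..n}" using True by (intro permutes_swap_id) auto
    have pb: "?b permutes {1..n}" using True by (intro permutes_swap_id) auto
    have e1: "?a 1 = 2" "?b 1 = 3" by simp_all
    have a1: "?a \<noteq> id" using e1 by (metis id_apply numeral_One numeral_eq_iff semiring_norm(85))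
    have b1: "?b \<noteq> id" using e1 by (metis id_apply numeral_One numeral_eq_iff semiring_norm(86))
    have ab: "?a \<noteq> ?b" using e1 by (metis numeral_eq_iff semiring_norm(89))
    show False
      by (rule not_iso_invol[OF h, of ?a ?b])
         (use pa pb a1 b1 ab in \<open>simp_all add: sym_group_def permutes_id\<close>)
  next
    case False
    have "card (carrier (sym_group n)) = fact n"
      by (simp add: sym_group_def card_permutations)
    moreover have "fact n \<le> (6::nat)"
    proof -
      have "n \<le> 3" using False by simp
      hence "fact n \<le> (fact 3 :: nat)" by (rule fact_mono_nat)
      thus ?thesis by (simp add: fact_numeral)
    qed
    ultimately show False using not_iso_card[OF h] m2 by (simp add: sym_group_def finite_permutations)
  qed
qed

end


lemma mat_mult_entry:
  assumes "i < n" "j < n"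
  shows "(mat n n f * mat n n g) $$ (i,j) = (\<Sum>k\<in>{0..<n}. f (i,k) * g (k,j))"
  using assms by (simp add: scalar_prod_def)

lemma diag_carrier[simp]: "diag_matrix n \<omega> \<in> carrier_mat n n"
  by (simp add: diag_matrix_def)
lemma perm_carrier[simp]: "perm_matrix n \<sigma> \<in> carrier_mat n n"
  by (simp add: perm_matrix_def)

lemma DP_entry:
  assumes "i < n" "j < n"
  shows "(diag_matrix n \<omega> * perm_matrix n \<sigma>) $$ (i,j) = \<omega> i * (if i = \<sigma> j then 1 else 0)"
proof -
  have "(diag_matrix n \<omega> * perm_matrix n \<sigma>) $$ (i,j) =
     (\<Sum>k\<in>{0..<n}. (if i = k then \<omega> i else 0) * (if k = \<sigma> j then 1 else 0))"
    unfolding diag_matrix_def perm_matrix_def by (subst mat_mult_entry[OF assms]) simp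
  also have "\<dots> = (\<Sum>k\<in>{0..<n}. if k = i then \<omega> i * (if i = \<sigma> j then 1 else 0) else 0)"
    by (intro sum.cong) auto
  also have "\<dots> = \<omega> i * (if i = \<sigma> j then 1 else 0)" using assms by simp
  finally show ?thesis .
qed

lemma perm_mult:
  assumes "\<tau> permutes {..<n}"
  shows "perm_matrix n \<sigma> * perm_matrix n \<tau> = perm_matrix n (\<sigma> \<circ> \<tau>)"
proof (rule eq_matI)
  fix i j assume i: "i < dim_row (perm_matrix n (\<sigma> \<circ> \<tau>))" and j: "j < dim_col (perm_matrix n (\<sigma> \<circ> \<tau>))"
  hence i': "i < n" and j': "j < n" by (simp_all add: perm_matrix_def)
  have "\<tau> j \<in> {..<n}" using permutes_in_image[OF assms] j' by simp
  hence tj: "\<tau> j < n" by simp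
  have "(perm_matrix n \<sigma> * perm_matrix n \<tau>) $$ (i,j) =
     (\<Sum>k\<in>{0..<n}. (if i = \<sigma> k then 1 else 0) * (if k = \<tau> j then 1 else 0))"
    unfolding perm_matrix_def by (subst mat_mult_entry[OF i' j']) simp
  also have "\<dots> = (\<Sum>k\<in>{0..<n}. if k = \<tau> j then (if i = \<sigma> (\<tau> j) then 1 else 0) else 0)"
    by (intro sum.cong) auto
  also have "\<dots> = (if i = \<sigma> (\<tau> j) then 1 else 0)" using tj by simp
  also have "\<dots> = perm_matrix n (\<sigma> \<circ> \<tau>) $$ (i,j)" using i' j' by (simp add: perm_matrix_def)
  finally show "(perm_matrix n \<sigma> * perm_matrix n \<tau>) $$ (i,j) = perm_matrix n (\<sigma> \<circ> \<tau>) $$ (i,j)" .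
qed (simp_all add: perm_matrix_def)

lemma perm_id: "perm_matrix n id = 1\<^sub>m n"
  by (rule eq_matI) (auto simp: perm_matrix_def)

lemma diag_one: "diag_matrix n (\<lambda>_. 1) = 1\<^sub>m n"
  by (rule eq_matI) (auto simp: diag_matrix_def)

lemma Gmpn_carrier_mat: "x \<in> carrier (Gmpn m' p n') \<Longrightarrow> x \<in> carrier_mat n' n'"
  by (auto simp: Gmpn_def intro!: mult_carrier_mat[OF diag_carrier perm_carrier])

lemma Gmpn_memI:
  assumes "\<sigma> permutes {..<n'}" "\<forall>i<n'. \<omega> i ^ m' = 1" "(\<Prod>i<n'. \<omega> i) ^ (m' div p) = 1"
  shows "diag_matrix n' \<omega> * perm_matrix n' \<sigma> \<in> carrier (Gmpn m' p n')"
  unfolding Gmpn_def by (simp, rule exI[of _ \<omega>], rule exI[of _ \<sigma>], simp add: assms)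

lemma Gmpn_one: "\<one>\<^bsub>Gmpn m' p n'\<^esub> = 1\<^sub>m n'" by (simp add: Gmpn_def)
lemma Gmpn_mult: "x \<otimes>\<^bsub>Gmpn m' p n'\<^esub> y = x * y" by (simp add: Gmpn_def)

lemma Gmpn_one_in: "1\<^sub>m n' \<in> carrier (Gmpn m' p n')"
proof -
  have "1\<^sub>m n' = diag_matrix n' (\<lambda>_. 1) * perm_matrix n' id" by (simp add: diag_one perm_id)
  moreover have "diag_matrix n' (\<lambda>_. 1) * perm_matrix n' id \<in> carrier (Gmpn m' p n')"
    by (rule Gmpn_memI) (simp_all add: permutes_id)
  ultimately show ?thesis by simp
qed

lemma Gmpn_perm_in: "\<sigma> permutes {..<n'} \<Longrightarrow> perm_matrix n' \<sigma> \<in> carrier (Gmpn m' p n')"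
proof -
  assume s: "\<sigma> permutes {..<n'}"
  have "perm_matrix n' \<sigma> = diag_matrix n' (\<lambda>_. 1) * perm_matrix n' \<sigma>"
    by (simp add: diag_one left_mult_one_mat[OF perm_carrier])
  moreover have "diag_matrix n' (\<lambda>_. 1) * perm_matrix n' \<sigma> \<in> carrier (Gmpn m' p n')"
    by (rule Gmpn_memI) (simp_all add: s)
  ultimately show ?thesis by simp
qed

lemma Gmpn_rn: "z \<in> carrier (Gmpn m' p n') \<Longrightarrow> z \<otimes>\<^bsub>Gmpn m' p n'\<^esub> \<one>\<^bsub>Gmpn m' p n'\<^esub> = z"
  unfolding Gmpn_one Gmpn_mult by (rule right_mult_one_mat[OF Gmpn_carrier_mat])

lemma perm_invol:
  assumes "a < n" "b < n"
  shows "perm_matrix n (transpose a b) * perm_matrix n (transpose a b) = 1\<^sub>m n"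
  using assms by (simp add: perm_mult permutes_swap_id perm_id)


lemma root_exists:
  assumes "(2::nat) \<le> k"
  shows "\<exists>\<zeta>::complex. \<zeta> ^ k = 1 \<and> \<zeta> \<noteq> 1"
proof -
  define x where "x = 2 * pi / real k"
  have kpos: "real k > 0" using assms by simp
  have pw: "cis x ^ k = 1"
  proof -
    have "real k * x = 2 * pi" using kpos by (simp add: x_def)
    thus ?thesis by (simp add: DeMoivre)
  qed
  have x0: "0 < x" using kpos by (simp add: x_def)
  have xpi: "x \<le> pi"
  proof -
    have "2 * pi \<le> real k * pi" using assms pi_gt_zero by (intro mult_right_mono) auto
    thus ?thesis using kpos by (simp add: x_def divide_le_eq mult.commute)
  qed
  have ne: "cis x \<noteq> 1"
  proof (cases "x = pi")
    case True thus ?thesis by simp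
  next
    case False
    hence "x < pi" using xpi by simp
    have "sin x > 0" by (rule sin_gt_zero[OF x0 \<open>x < pi\<close>])
    hence "Im (cis x) \<noteq> Im 1" by simp
    thus ?thesis by metis
  qed
  show ?thesis using pw ne by blast
qed

lemma mat11_comm:
  assumes "A \<in> carrier_mat 1 1" "B \<in> carrier_mat 1 1"
  shows "A * B = (B * A :: complex mat)"
proof -
  have d: "dim_row A = 1" "dim_col A = 1" "dim_row B = 1" "dim_col B = 1" using assms by auto
  show ?thesis
  proof (rule eq_matI)
    fix i j assume "i < dim_row (B * A)" "j < dim_col (B * A)"
    hence "i = 0" "j = 0" using d by auto
    thus "(A * B) $$ (i,j) = (B * A) $$ (i,j)" using d by (simp add: scalar_prod_def mult.commute)
  qed (simp_all add: d)
qed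

lemma mult_entry_gen:
  assumes "A \<in> carrier_mat n n" "B \<in> carrier_mat n n" "i < n" "j < n"
  shows "(A * B) $$ (i,j) = (\<Sum>k\<in>{0..<n}. A $$ (i,k) * B $$ (k,j))"
proof -
  have d: "dim_row A = n" "dim_col A = n" "dim_row B = n" "dim_col B = n" using assms by auto
  have "(A * B) $$ (i,j) = row A i \<bullet> col B j" using assms d by simp
  also have "\<dots> = (\<Sum>k\<in>{0..<n}. A $$ (i,k) * B $$ (k,j))"
    unfolding scalar_prod_def using assms d by (intro sum.cong) auto
  finally show ?thesis .
qed

lemma perm_entry: "i < n \<Longrightarrow> j < n \<Longrightarrow> perm_matrix n \<sigma> $$ (i,j) = (if i = \<sigma> j then 1 else 0)"
  by (simp add: perm_matrix_def)

context Qsetup begin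

lemma not_iso_Gmpn:
  assumes m2: "m \<ge> 2" and pos: "0 < m'" "0 < p" "0 < n'" and dv: "p dvd m'"
  shows "\<not> GG \<cong> Gmpn m' p n'"
proof
  assume "GG \<cong> Gmpn m' p n'"
  then obtain h where h: "h \<in> iso GG (Gmpn m' p n')" by (auto simp: is_iso_def)
  have o: "\<one>\<^bsub>Gmpn m' p n'\<^esub> \<in> carrier (Gmpn m' p n')" unfolding Gmpn_one by (rule Gmpn_one_in)
  note inv = not_iso_invol[OF h o Gmpn_rn]
  show False
  proof (cases "n' = 1")
    case True
    show False
      by (rule not_iso_comm[OF m2 h])
         (use True in \<open>simp add: Gmpn_mult mat11_comm Gmpn_carrier_mat\<close>)
  next
    case n1: False
    show False
    proof (cases "n' \<ge> 3")
      case True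
      let ?a = "perm_matrix n' (transpose 0 1)" and ?b = "perm_matrix n' (transpose 1 2)"
      have pa: "transpose 0 1 permutes {..<n'}" using True by (intro permutes_swap_id) auto
      have pb: "transpose 1 2 permutes {..<n'}" using True by (intro permutes_swap_id) auto
      have ea: "?a $$ (0,1) = 1" using True by (simp add: perm_entry)
      have eb: "?b $$ (0,1) = 0" using True by (simp add: perm_entry)
      have eb2: "?b $$ (1,2) = 1" using True by (simp add: perm_entry)
      have e1: "1\<^sub>m n' $$ (0,1) = (0::complex)" "1\<^sub>m n' $$ (1,2) = (0::complex)" using True by simp_all
      show False
      proof (rule inv[of ?a ?b])
        show "?a \<in> carrier (Gmpn m' p n')" "?b \<in> carrier (Gmpn m' p n')"
          using pa pb by (simp_all add: Gmpn_perm_in)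
        show "?a \<otimes>\<^bsub>Gmpn m' p n'\<^esub> ?a = \<one>\<^bsub>Gmpn m' p n'\<^esub>" "?b \<otimes>\<^bsub>Gmpn m' p n'\<^esub> ?b = \<one>\<^bsub>Gmpn m' p n'\<^esub>"
          using True by (simp_all add: Gmpn_mult Gmpn_one perm_invol)
        show "?a \<noteq> \<one>\<^bsub>Gmpn m' p n'\<^esub>" using ea e1 by (auto simp: Gmpn_one)
        show "?b \<noteq> \<one>\<^bsub>Gmpn m' p n'\<^esub>" using eb2 e1 by (auto simp: Gmpn_one)
        show "?a \<noteq> ?b" using ea eb by auto
      qed
    next
      case False
      hence n2: "n' = 2" using n1 pos by simp
      show False
      proof (cases "m' = 1")
        case True
        have sub: "carrier (Gmpn m' p n') \<subseteq> perm_matrix 2 ` {\<sigma>. \<sigma> permutes {..<2}}"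
        proof
          fix x assume "x \<in> carrier (Gmpn m' p n')"
          then obtain \<omega> \<sigma> where x: "x = diag_matrix 2 \<omega> * perm_matrix 2 \<sigma>" and s: "\<sigma> permutes {..<2}"
            and w: "\<forall>i<2. \<omega> i ^ m' = 1" using n2 by (auto simp: Gmpn_def)
          have "diag_matrix 2 \<omega> = diag_matrix 2 (\<lambda>_. 1)"
            using w True by (intro eq_matI) (auto simp: diag_matrix_def)
          hence "x = perm_matrix 2 \<sigma>" using x by (simp add: diag_one left_mult_one_mat[OF perm_carrier])
          thus "x \<in> perm_matrix 2 ` {\<sigma>. \<sigma> permutes {..<2}}" using s by auto
        qed
        have fin: "finite {\<sigma>. \<sigma> permutes {..<(2::nat)}}" by (rule finite_permutations) simp
        have "card {\<sigma>. \<sigma> permutes {..<(2::nat)}} = 2"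
          using card_permutations[of "{..<(2::nat)}" 2] by simp
        hence c: "card (carrier (Gmpn m' p n')) \<le> 2"
          using sub fin by (metis card_image_le card_mono finite_imageI le_trans)
        have f: "finite (carrier (Gmpn m' p n'))" using sub fin by (meson finite_imageI finite_subset)
        show False using not_iso_card[OF h f] c m2 by simp
      next
        case False
        hence m'2: "m' \<ge> 2" using pos by simp
        obtain \<zeta> :: complex where z: "\<zeta> ^ m' = 1" "\<zeta> \<noteq> 1" using root_exists[OF m'2] by blast
        have z0: "\<zeta> \<noteq> 0" using z pos by (metis power_0_left less_not_refl)
        define \<omega> where "\<omega> = (\<lambda>i::nat. if i = 0 then \<zeta> else inverse \<zeta>)"
        let ?t = "transpose (0::nat) 1"
        let ?a = "perm_matrix 2 ?t" and ?b = "diag_matrix 2 \<omega> * perm_matrix 2 ?t"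
        have pt: "?t permutes {..<2}" by (intro permutes_swap_id) auto
        have ea: "?a $$ (0,1) = 1" by (simp add: perm_entry)
        have eb: "?b $$ (0,1) = \<zeta>" by (simp add: DP_entry \<omega>_def)
        have bsq: "?b * ?b = 1\<^sub>m 2"
        proof (rule eq_matI)
          fix i j assume "i < dim_row (1\<^sub>m 2 :: complex mat)" "j < dim_col (1\<^sub>m 2 :: complex mat)"
          hence i: "i < 2" and j: "j < 2" by simp_all
          have "(?b * ?b) $$ (i,j) = (\<Sum>k\<in>{0..<2}. ?b $$ (i,k) * ?b $$ (k,j))"
            using i j by (intro mult_entry_gen) (auto intro!: mult_carrier_mat[OF diag_carrier perm_carrier])
          also have "\<dots> = (\<Sum>k\<in>{0..<2}. (\<omega> i * (if i = ?t k then 1 else 0)) * (\<omega> k * (if k = ?t j then 1 else 0)))"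
          proof (intro sum.cong refl)
            fix k assume "k \<in> {0..<2::nat}"
            hence k: "k < 2" by simp
            show "?b $$ (i,k) * ?b $$ (k,j) = (\<omega> i * (if i = ?t k then 1 else 0)) * (\<omega> k * (if k = ?t j then 1 else 0))"
              by (simp only: DP_entry[OF i k] DP_entry[OF k j])
          qed
          also have "\<dots> = (\<Sum>k\<in>{0..<2}. if k = ?t j then \<omega> i * \<omega> (?t j) * (if i = j then 1 else 0) else 0)"
            by (intro sum.cong) auto
          also have "\<dots> = \<omega> i * \<omega> (?t j) * (if i = j then 1 else 0)"
            using j by (simp add: transpose_def)
          also have "\<dots> = 1\<^sub>m 2 $$ (i,j)"
            using i j z0 by (auto simp: \<omega>_def transpose_def)
          finally show "(?b * ?b) $$ (i,j) = 1\<^sub>m 2 $$ (i,j)" .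
        qed (simp_all add: diag_matrix_def perm_matrix_def)
        show False
        proof (rule inv[of ?a ?b])
          show "?a \<in> carrier (Gmpn m' p n')" using pt n2 by (simp add: Gmpn_perm_in)
          show "?b \<in> carrier (Gmpn m' p n')" unfolding n2
          proof (rule Gmpn_memI[OF pt])
            show "\<forall>i<2. \<omega> i ^ m' = 1" using z by (simp add: \<omega>_def power_inverse)
            have "(\<Prod>i<2. \<omega> i) = 1" using z0 by (simp add: \<omega>_def numeral_2_eq_2)
            thus "(\<Prod>i<2. \<omega> i) ^ (m' div p) = 1" by simp
          qed
          show "?a \<otimes>\<^bsub>Gmpn m' p n'\<^esub> ?a = \<one>\<^bsub>Gmpn m' p n'\<^esub>"
            using n2 by (simp add: Gmpn_mult Gmpn_one perm_invol)
          show "?b \<otimes>\<^bsub>Gmpn m' p n'\<^esub> ?b = \<one>\<^bsub>Gmpn m' p n'\<^esub>"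
            using n2 bsq by (simp add: Gmpn_mult Gmpn_one)
          show "?a \<noteq> \<one>\<^bsub>Gmpn m' p n'\<^esub>" using ea n2 by (auto simp: Gmpn_one)
          show "?b \<noteq> \<one>\<^bsub>Gmpn m' p n'\<^esub>" using eb n2 z0 by (auto simp: Gmpn_one)
          show "?a \<noteq> ?b" using ea eb z by auto
        qed
      qed
    qed
  qed
qed

end


theorem mainTheorem18:
  fixes m :: nat and lam :: complex
  assumes "m \<ge> 1"
    and "lam ^ (2 * m) = 1" and "\<forall>k. 0 < k \<and> k < 2 * m \<longrightarrow> lam ^ k \<noteq> 1"
  defines "G \<equiv> subgroup_generated sk_Aut {sk_tau 2 1 1, sk_tau 2 1 lam}"
  shows "sk_invariants G =
           sk_alg_gen {sk_mult sk_x1 sk_x2, sk_add (sk_pow sk_x1 (2 * m)) (sk_pow sk_x2 (2 * m))}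
         \<and> G \<cong> dicyclic_group m
         \<and> (m \<ge> 2 \<longrightarrow>
           (\<forall>H :: ('c, 'd) monoid_scheme. group H \<and> cyclic_group H \<longrightarrow> \<not> G \<cong> H)
         \<and> (\<forall>n. \<not> G \<cong> sym_group n)
         \<and> (\<forall>m' p n'. 0 < m' \<and> 0 < p \<and> 0 < n' \<and> p dvd m' \<longrightarrow> \<not> G \<cong> Gmpn m' p n'))"
proof -
  interpret Q: Qsetup m lam using assms(1-3) by unfold_locales
  have GG: "G = Q.GG" by (simp add: G_def Q.GG_def)
  show ?thesis unfolding GG
  proof (intro conjI impI allI)
    show "sk_invariants Q.GG =
           sk_alg_gen {sk_mult sk_x1 sk_x2, sk_add (sk_pow sk_x1 (2 * m)) (sk_pow sk_x2 (2 * m))}"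
      by (rule Q.invariants_eq)
    show "Q.GG \<cong> dicyclic_group m" by (rule Q.GG_iso)
  next
    fix H :: "('c, 'd) monoid_scheme"
    assume "2 \<le> m" "group H \<and> cyclic_group H"
    thus "\<not> Q.GG \<cong> H" using Q.not_iso_cyclic by blast
  next
    fix n assume "2 \<le> m"
    thus "\<not> Q.GG \<cong> sym_group n" by (rule Q.not_iso_sym)
  next
    fix m' p n' :: nat assume "2 \<le> m" "0 < m' \<and> 0 < p \<and> 0 < n' \<and> p dvd m'"
    thus "\<not> Q.GG \<cong> Gmpn m' p n'" using Q.not_iso_Gmpn by blast
  qed
qed


end
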